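(* The map $d_\mu(N_1,N_2)=|\boldsymbol\mu(N_1)\,\triangle\,\boldsymbol\mu(N_2)|$ (cardinality of the symmetric difference of the sets $\boldsymbol\mu(N_1)$ and $\boldsymbol\mu(N_2)$) is a well-defined metric on the set of isomorphism classes of orchard networks over sets of taxa contained in $[n]$; that is, for all such orchard networks $N_1,N_2,N_3$: $d_\mu(N_1,N_2)\ge0$; $d_\mu(N_1,N_2)=0$ if and only if $N_1\cong N_2$; $d_\mu(N_1,N_2)=d_\mu(N_2,N_1)$; and $d_\mu(N_1,N_3)\le d_\mu(N_1,N_2)+d_\mu(N_2,N_3)$.
   Context: A (binary) phylogenetic network on a finite set $X\subseteq[n]=\{1,\dots,n\}$ is a directed acyclic graph $N=(V,A)$ without parallel arcs in which every node is exactly one of: the root (indegree 0, outdegree 1; there is exactly one), a leaf (indegree 1, outdegree 0), a tree node (indegree 1, outdegree 2), or a reticulation (indegree 2, outdegree 1); the leaves are identified with the elements of $X$. $V_T(N)$ denotes the set of leaves and tree nodes, $V_H(N)$ the set of reticulations. Two networks are isomorphic ($N\cong N'$) if there is a bijection between their node sets that is the identity on leaves (labels) and maps arcs to arcs and non-arcs to non-arcs. $m(u,v)$ is the number of directed paths from $u$ to $v$ (trivial paths allowed). Extended $\mu$-vectors: $\mu_i(u)=m(u,i)$ for $i\in[n]$ (0 if $i$ is not a leaf), $\mu_0(u)=\sum_{h\in V_H(N)} m(u,h)$, $\mu(u)=(\mu_0(u),\dots,\mu_n(u))$; the extended $\mu$-representation $\boldsymbol\mu(N)$ is $\{\mu(u)\mid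 u\in V_T(N)\}$ (for orchard networks it has no repeated elements, so it is a set). For distinct leaves $i,j$ with parents $p_i,p_j$: $(i,j)$ is a cherry of $N$ if $p_i=p_j$; a reticulated-cherry of $N$ if $p_i$ is a reticulation, $p_j$ is a tree node and $p_j$ is a parent of $p_i$; reducible if either. Suppressing a node with indegree 1 and outdegree 1 means deleting it and its two arcs and adding an arc from its parent to its child. $N^{(i,j)}$: if $(i,j)$ is a cherry, delete leaf $i$ and its incoming arc, then suppress $p_i$; if a reticulated-cherry, delete the arc $p_jp_i$ and suppress $p_i$ and $p_j$. A sequence $S=s_1\cdots s_k$ is reducible in $N$ if $s_1$ is reducible in $N$ and each $s_t$ is reducible in the network obtained by successively reducing $s_1,\dots,s_{t-1}$; $N^S$ is the final network. $N$ is an orchard network if there is a reducible sequence $S$ with $N^S$ equal to the network consisting of a root joined by an arc to a single leaf. *)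

theory Defs
  imports Main
begin

text \<open>Nodes: leaves are identified with their labels (Leaf i); all other nodes are Inner k.
A network is a pair (V, A) of a node set and an arc set (no parallel arcs since A is a set).\<close>

datatype node = Leaf nat | Inner nat

type_synonym network = "node set \<times> (node \<times> node) set"

definition indeg :: "(node \<times> node) set \<Rightarrow> node \<Rightarrow> nat" where
  "indeg A v = card {u. (u, v) \<in> A}"

definition outdeg :: "(node \<times> node) set \<Rightarrow> node \<Rightarrow> nat" where
  "outdeg A v = card {w. (v, w) \<in> A}"

definition is_root :: "(node \<times> node) set \<Rightarrow> node \<Rightarrow> bool" where
  "is_root A v \<longleftrightarrow> indeg A v = 0 \<and> outdeg A v = 1"

definition is_leaf :: "(node \<times> node) set \<Rightarrow> node \<Rightarrow> bool" where
  "is_leaf A v \<longleftrightarrow> indeg A v = 1 \<and> outdeg A v = 0"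

definition is_tree_node :: "(node \<times> node) set \<Rightarrow> node \<Rightarrow> bool" where
  "is_tree_node A v \<longleftrightarrow> indeg A v = 1 \<and> outdeg A v = 2"

definition is_retic :: "(node \<times> node) set \<Rightarrow> node \<Rightarrow> bool" where
  "is_retic A v \<longleftrightarrow> indeg A v = 2 \<and> outdeg A v = 1"

definition phylo_net :: "nat \<Rightarrow> network \<Rightarrow> bool" where
  "phylo_net n N \<longleftrightarrow> (case N of (V, A) \<Rightarrow>
     finite V \<and> A \<subseteq> V \<times> V \<and> (\<forall>v. (v, v) \<notin> A\<^sup>+) \<and>
     (\<exists>!r. r \<in> V \<and> is_root A r) \<and>
     (\<forall>v\<in>V. is_root A v \<or> is_leaf A v \<or> is_tree_node A v \<or> is_retic A v) \<and>
     (\<forall>v\<in>V. is_leaf A v \<longleftrightarrow> (\<exists>i. v = Leaf i)) \<and>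
     {i. Leaf i \<in> V} \<subseteq> {1..n})"

definition parent :: "(node \<times> node) set \<Rightarrow> node \<Rightarrow> node" where
  "parent A v = (THE u. (u, v) \<in> A)"

definition child :: "(node \<times> node) set \<Rightarrow> node \<Rightarrow> node" where
  "child A v = (THE w. (v, w) \<in> A)"

definition suppress :: "network \<Rightarrow> node \<Rightarrow> network" where
  "suppress N v = (case N of (V, A) \<Rightarrow>
     (V - {v}, (A - {(parent A v, v), (v, child A v)}) \<union> {(parent A v, child A v)}))"

definition is_cherry :: "network \<Rightarrow> nat \<times> nat \<Rightarrow> bool" where
  "is_cherry N p = (case N of (V, A) \<Rightarrow> case p of (i, j) \<Rightarrow>
     i \<noteq> j \<and> Leaf i \<in> V \<and> Leaf j \<in> V \<and> parent A (Leaf i) = parent A (Leaf j))"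

definition is_ret_cherry :: "network \<Rightarrow> nat \<times> nat \<Rightarrow> bool" where
  "is_ret_cherry N p = (case N of (V, A) \<Rightarrow> case p of (i, j) \<Rightarrow>
     i \<noteq> j \<and> Leaf i \<in> V \<and> Leaf j \<in> V \<and>
     is_retic A (parent A (Leaf i)) \<and> is_tree_node A (parent A (Leaf j)) \<and>
     (parent A (Leaf j), parent A (Leaf i)) \<in> A)"

definition is_reducible :: "network \<Rightarrow> nat \<times> nat \<Rightarrow> bool" where
  "is_reducible N p \<longleftrightarrow> is_cherry N p \<or> is_ret_cherry N p"

definition reduce :: "network \<Rightarrow> nat \<times> nat \<Rightarrow> network" where
  "reduce N p = (case N of (V, A) \<Rightarrow> case p of (i, j) \<Rightarrow>
     if is_cherry N p then
       (let pi = parent A (Leaf i) in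
        suppress (V - {Leaf i}, A - {(pi, Leaf i)}) pi)
     else if is_ret_cherry N p then
       (let pi = parent A (Leaf i); pj = parent A (Leaf j) in
        suppress (suppress (V, A - {(pj, pi)}) pi) pj)
     else N)"

fun reducible_seq :: "network \<Rightarrow> (nat \<times> nat) list \<Rightarrow> bool" where
  "reducible_seq N [] = True"
| "reducible_seq N (s # S) = (is_reducible N s \<and> reducible_seq (reduce N s) S)"

definition reduce_seq :: "network \<Rightarrow> (nat \<times> nat) list \<Rightarrow> network" where
  "reduce_seq N S = foldl reduce N S"

definition orchard :: "nat \<Rightarrow> network \<Rightarrow> bool" where
  "orchard n N \<longleftrightarrow> phylo_net n N \<and>
     (\<exists>S. reducible_seq N S \<and>
        (\<exists>r i. (\<forall>k. r \<noteq> Leaf k) \<and> reduce_seq N S = ({r, Leaf i}, {(r, Leaf i)})))"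

definition net_iso :: "network \<Rightarrow> network \<Rightarrow> bool" where
  "net_iso N1 N2 \<longleftrightarrow> (case N1 of (V1, A1) \<Rightarrow> case N2 of (V2, A2) \<Rightarrow>
     (\<exists>f. bij_betw f V1 V2 \<and> (\<forall>i. Leaf i \<in> V1 \<longrightarrow> f (Leaf i) = Leaf i) \<and>
          (\<forall>u\<in>V1. \<forall>v\<in>V1. (u, v) \<in> A1 \<longleftrightarrow> (f u, f v) \<in> A2)))"

text \<open>Directed paths as nonempty node lists (trivial paths allowed); m(u,v) counts them.\<close>
definition is_path :: "(node \<times> node) set \<Rightarrow> node list \<Rightarrow> bool" where
  "is_path A xs \<longleftrightarrow> xs \<noteq> [] \<and> (\<forall>k. Suc k < length xs \<longrightarrow> (xs ! k, xs ! Suc k) \<in> A)"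

definition npaths :: "(node \<times> node) set \<Rightarrow> node \<Rightarrow> node \<Rightarrow> nat" where
  "npaths A u v = card {xs. is_path A xs \<and> hd xs = u \<and> last xs = v}"

text \<open>Extended mu-vector (mu_0, ..., mu_n) as a list of length n+1.\<close>
definition mu_vec :: "nat \<Rightarrow> network \<Rightarrow> node \<Rightarrow> nat list" where
  "mu_vec n N u = (case N of (V, A) \<Rightarrow>
     map (\<lambda>i. if i = 0 then (\<Sum>h\<in>{h\<in>V. is_retic A h}. npaths A u h)
               else npaths A u (Leaf i)) [0..<Suc n])"

definition mu_rep :: "nat \<Rightarrow> network \<Rightarrow> nat list set" where
  "mu_rep n N = (case N of (V, A) \<Rightarrow>
     mu_vec n N ` {v\<in>V. is_leaf A v \<or> is_tree_node A v})"

definition d_mu :: "nat \<Rightarrow> network \<Rightarrow> network \<Rightarrow> nat" where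
  "d_mu n N1 N2 = card ((mu_rep n N1 - mu_rep n N2) \<union> (mu_rep n N2 - mu_rep n N1))"

end

theory Submission
  imports Defs
begin

definition pars :: "(node \<times> node) set \<Rightarrow> node \<Rightarrow> node set" where "pars A v = {u. (u,v) \<in> A}"
definition chs :: "(node \<times> node) set \<Rightarrow> node \<Rightarrow> node set" where "chs A u = {w. (u,w) \<in> A}"

lemma is_path_Cons: "is_path A (x # xs) \<longleftrightarrow> (xs = [] \<or> ((x, hd xs) \<in> A \<and> is_path A xs))"
proof (cases xs)
  case Nil then show ?thesis by (simp add: is_path_def)
next
  case (Cons y ys)
  show ?thesis
  proof
    assume H: "is_path A (x # xs)"
    have "Suc 0 < length (x # xs)" using Cons by simp
    then have "((x#xs)!0, (x#xs)!Suc 0) \<in> A" using H unfolding is_path_def by blast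
    then have "(x, y) \<in> A" using Cons by simp
    moreover have "is_path A xs" unfolding is_path_def
    proof (intro conjI allI impI)
      show "xs \<noteq> []" using Cons by simp
      fix k assume "Suc k < length xs"
      then have "Suc (Suc k) < length (x # xs)" by simp
      then have "((x#xs)!Suc k, (x#xs)!Suc (Suc k)) \<in> A" using H unfolding is_path_def by blast
      then show "(xs ! k, xs ! Suc k) \<in> A" by simp
    qed
    ultimately show "xs = [] \<or> ((x, hd xs) \<in> A \<and> is_path A xs)" using Cons by simp
  next
    assume H: "xs = [] \<or> ((x, hd xs) \<in> A \<and> is_path A xs)"
    then have a: "(x,y) \<in> A" and p: "is_path A xs" using Cons by auto
    show "is_path A (x # xs)" unfolding is_path_def
    proof (intro conjI allI impI)
      show "x # xs \<noteq> []" by simp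
      fix k assume k: "Suc k < length (x # xs)"
      show "((x # xs) ! k, (x # xs) ! Suc k) \<in> A"
      proof (cases k)
        case 0 then show ?thesis using a Cons by simp
      next
        case (Suc k') then show ?thesis using p k unfolding is_path_def by simp
      qed
    qed
  qed
qed

lemma is_path_ne: "is_path A xs \<Longrightarrow> xs \<noteq> []" by (simp add: is_path_def)

lemma is_path_single[simp]: "is_path A [x]" by (simp add: is_path_def)

lemma is_path_snoc: "is_path A (xs @ [y]) \<longleftrightarrow> (xs = [] \<or> (is_path A xs \<and> (last xs, y) \<in> A))"
proof (induction xs)
  case Nil then show ?case by simp
next
  case (Cons x xs)
  show ?case
  proof (cases xs)
    case Nil then show ?thesis by (simp add: is_path_Cons)
  next
    case (Cons z zs)
    then show ?thesis using Cons.IH by (auto simp: is_path_Cons)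
  qed
qed

lemma is_path_rev: "is_path A xs \<Longrightarrow> is_path (A\<inverse>) (rev xs)"
proof (induction xs)
  case Nil then show ?case by (simp add: is_path_def)
next
  case (Cons x xs)
  show ?case
  proof (cases xs)
    case Nil then show ?thesis by simp
  next
    case (Cons y ys)
    then have "(x, y) \<in> A" "is_path A xs" using Cons.prems by (auto simp: is_path_Cons)
    then have "is_path (A\<inverse>) (rev xs)" using Cons.IH by simp
    moreover have "last (rev xs) = y" using Cons by simp
    moreover have "rev xs \<noteq> []" using Cons by simp
    ultimately have "is_path (A\<inverse>) (rev xs @ [x])" using \<open>(x,y) \<in> A\<close> is_path_snoc[of "A\<inverse>" "rev xs" x] by simp
    then show ?thesis by simp
  qed
qed

lemma is_path_rev_iff: "is_path (A\<inverse>) (rev xs) \<longleftrightarrow> is_path A xs"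
  using is_path_rev[of A xs] is_path_rev[of "A\<inverse>" "rev xs"] by auto

lemma path_rtrancl: "is_path A xs \<Longrightarrow> (hd xs, last xs) \<in> A\<^sup>*"
proof (induction xs)
  case Nil then show ?case by (simp add: is_path_def)
next
  case (Cons x xs)
  then show ?case
    by (cases xs) (auto simp: is_path_Cons intro: converse_rtrancl_into_rtrancl)
qed

lemma path_trancl: "is_path A (x # xs) \<Longrightarrow> xs \<noteq> [] \<Longrightarrow> (x, last xs) \<in> A\<^sup>+"
  using path_rtrancl[of A xs] by (auto simp: is_path_Cons intro: rtrancl_into_trancl2)

lemma rtrancl_path: "(u,v) \<in> A\<^sup>* \<Longrightarrow> \<exists>xs. is_path A xs \<and> hd xs = u \<and> last xs = v"
proof (induction rule: converse_rtrancl_induct)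
  case base then show ?case by (intro exI[of _ "[v]"]) simp
next
  case (step y z)
  then obtain xs where "is_path A xs" "hd xs = z" "last xs = v" by blast
  moreover have "xs \<noteq> []" using \<open>is_path A xs\<close> by (simp add: is_path_def)
  ultimately show ?case using step by (intro exI[of _ "y # xs"]) (auto simp: is_path_Cons)
qed

lemma path_nth_trancl: "is_path A xs \<Longrightarrow> k < l \<Longrightarrow> l < length xs \<Longrightarrow> (xs!k, xs!l) \<in> A\<^sup>+"
proof (induction l)
  case 0 then show ?case by simp
next
  case (Suc l)
  have a: "(xs ! l, xs ! Suc l) \<in> A" using Suc.prems unfolding is_path_def by simp
  show ?case
  proof (cases "k = l")
    case True then show ?thesis using a by simp
  next
    case False
    then have "k < l" using Suc.prems by simp
    then have "(xs!k, xs!l) \<in> A\<^sup>+" using Suc by simp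
    then show ?thesis using a by simp
  qed
qed

lemma path_distinct: "acyclic A \<Longrightarrow> is_path A xs \<Longrightarrow> distinct xs"
  unfolding distinct_conv_nth
proof (intro allI impI)
  fix i j assume a: "acyclic A" "is_path A xs" "i < length xs" "j < length xs" "i \<noteq> j"
  show "xs ! i \<noteq> xs ! j"
  proof
    assume e: "xs ! i = xs ! j"
    have "(xs!(min i j), xs!(max i j)) \<in> A\<^sup>+" using a by (intro path_nth_trancl) (auto simp: min_def max_def)
    then have "(xs!i, xs!i) \<in> A\<^sup>+" using e by (cases "i \<le> j") (auto simp: min_def max_def)
    then show False using a(1) by (simp add: acyclic_def)
  qed
qed

lemma path_set: "is_path A xs \<Longrightarrow> set xs \<subseteq> insert (hd xs) (snd ` A)"
proof (induction xs)
  case Nil then show ?case by simp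
next
  case (Cons x xs)
  show ?case
  proof (cases xs)
    case Nil then show ?thesis by simp
  next
    case (Cons y ys)
    then have "(x, y) \<in> A" "is_path A xs" using Cons.prems by (auto simp: is_path_Cons)
    then have "set xs \<subseteq> insert y (snd ` A)" "y \<in> snd ` A" using Cons.IH Cons by force+
    then show ?thesis by auto
  qed
qed

definition PS :: "(node \<times> node) set \<Rightarrow> node \<Rightarrow> node \<Rightarrow> node list set" where
  "PS A u v = {xs. is_path A xs \<and> hd xs = u \<and> last xs = v}"

lemma npaths_PS: "npaths A u v = card (PS A u v)" by (simp add: npaths_def PS_def)

lemma finite_PS: assumes "finite A" "acyclic A" shows "finite (PS A u v)"
proof -
  have "PS A u v \<subseteq> {xs. set xs \<subseteq> insert u (snd ` A) \<and> distinct xs}"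
    using path_set path_distinct[OF assms(2)] unfolding PS_def by blast
  moreover have "finite {xs. set xs \<subseteq> insert u (snd ` A) \<and> distinct xs}"
    using assms(1) by (intro finite_subset_distinct) auto
  ultimately show ?thesis by (rule finite_subset)
qed

lemma npaths_pos_iff: assumes "finite A" "acyclic A"
  shows "npaths A u v > 0 \<longleftrightarrow> (u,v) \<in> A\<^sup>*"
proof -
  have "PS A u v \<noteq> {} \<longleftrightarrow> (u,v) \<in> A\<^sup>*"
    unfolding PS_def using path_rtrancl rtrancl_path by fastforce
  then show ?thesis using finite_PS[OF assms] by (simp add: npaths_PS card_gt_0_iff)
qed

lemma npaths_zero: assumes "finite A" "acyclic A" "(u,v) \<notin> A\<^sup>*" shows "npaths A u v = 0"
  using npaths_pos_iff[OF assms(1,2)] assms(3) by (metis neq0_conv)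

lemma npaths_self: assumes "acyclic A" shows "npaths A u u = 1"
proof -
  have "PS A u u = {[u]}"
  proof
    show "PS A u u \<subseteq> {[u]}"
    proof
      fix xs assume "xs \<in> PS A u u"
      then have p: "is_path A xs" "hd xs = u" "last xs = u" by (auto simp: PS_def)
      then obtain ys where xs: "xs = u # ys" by (cases xs) (auto simp: is_path_def)
      show "xs \<in> {[u]}"
      proof (cases ys)
        case Nil then show ?thesis using xs by simp
      next
        case (Cons y ys')
        then have "(u, u) \<in> A\<^sup>+" using path_trancl[of A u ys] p xs by simp
        then show ?thesis using assms by (simp add: acyclic_def)
      qed
    qed
  qed (auto simp: PS_def)
  then show ?thesis by (simp add: npaths_PS)
qed

lemma npaths_conv: "npaths A u v = npaths (A\<inverse>) v u"
proof -
  have "PS A u v = rev ` PS (A\<inverse>) v u"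
  proof
    show "PS A u v \<subseteq> rev ` PS (A\<inverse>) v u"
    proof
      fix xs assume "xs \<in> PS A u v"
      then have "rev xs \<in> PS (A\<inverse>) v u"
        by (auto simp: PS_def is_path_rev hd_rev last_rev)
      then show "xs \<in> rev ` PS (A\<inverse>) v u" by (metis image_eqI rev_rev_ident)
    qed
    show "rev ` PS (A\<inverse>) v u \<subseteq> PS A u v"
    proof
      fix xs assume "xs \<in> rev ` PS (A\<inverse>) v u"
      then obtain ys where ys: "xs = rev ys" "is_path (A\<inverse>) ys" "hd ys = v" "last ys = u"
        by (auto simp: PS_def)
      have "is_path A (rev ys)" using is_path_rev[OF ys(2)] by simp
      then show "xs \<in> PS A u v" using ys is_path_ne[OF ys(2)] by (simp add: PS_def hd_rev last_rev)
    qed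
  qed
  then show ?thesis by (simp add: npaths_PS card_image)
qed

lemma npaths_rec: assumes "finite A" "acyclic A" "u \<noteq> v"
  shows "npaths A u v = (\<Sum>w\<in>chs A u. npaths A w v)"
proof -
  have eq: "PS A u v = (\<Union>w\<in>chs A u. (Cons u) ` PS A w v)"
  proof
    show "PS A u v \<subseteq> (\<Union>w\<in>chs A u. (Cons u) ` PS A w v)"
    proof
      fix xs assume "xs \<in> PS A u v"
      then have p: "is_path A xs" "hd xs = u" "last xs = v" by (auto simp: PS_def)
      then obtain ys where xs: "xs = u # ys" by (cases xs) (auto simp: is_path_def)
      have "ys \<noteq> []" using xs p assms(3) by auto
      then have "(u, hd ys) \<in> A" "is_path A ys" "last ys = v" using p xs by (auto simp: is_path_Cons)
      then show "xs \<in> (\<Union>w\<in>chs A u. (Cons u) ` PS A w v)" using xs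
        by (auto simp: chs_def PS_def)
    qed
    show "(\<Union>w\<in>chs A u. (Cons u) ` PS A w v) \<subseteq> PS A u v"
      by (auto simp: chs_def PS_def is_path_Cons dest: is_path_ne)
  qed
  have fc: "finite (chs A u)"
  proof -
    have "chs A u = snd ` {a\<in>A. fst a = u}" by (force simp: chs_def)
    then show ?thesis using assms(1) by simp
  qed
  have "card (PS A u v) = (\<Sum>w\<in>chs A u. card ((Cons u) ` PS A w v))"
    unfolding eq
    by (rule card_UN_disjoint[OF fc]) (use finite_PS[OF assms(1,2)] in \<open>auto simp: PS_def\<close>)
  also have "\<dots> = (\<Sum>w\<in>chs A u. card (PS A w v))"
    by (simp add: card_image)
  finally show ?thesis by (simp add: npaths_PS)
qed


lemma card2_iff: "card S = 2 \<longleftrightarrow> (\<exists>a b. a \<noteq> b \<and> S = {a,b})"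
  by (auto simp: card_2_iff)

lemma parent_eq: "pars A v = {p} \<Longrightarrow> parent A v = p"
  unfolding parent_def pars_def by (rule the_equality) auto

lemma child_eq: "chs A v = {c} \<Longrightarrow> child A v = c"
  unfolding child_def chs_def by (rule the_equality) auto

definition mf :: "node set \<Rightarrow> (node \<times> node) set \<Rightarrow> node \<Rightarrow> nat \<Rightarrow> nat" where
  "mf V A u i = (if i = 0 then (\<Sum>h\<in>{h\<in>V. is_retic A h}. npaths A u h) else npaths A u (Leaf i))"

lemma mu_vec_mf: "mu_vec n (V,A) u = map (mf V A u) [0..<Suc n]"
  by (simp add: mu_vec_def mf_def)

definition delta :: "(node \<times> node) set \<Rightarrow> node \<Rightarrow> nat \<Rightarrow> nat" where
  "delta A u i = (if i = 0 then (if is_retic A u then 1 else 0) else (if u = Leaf i then 1 else 0))"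

definition TL :: "node set \<Rightarrow> (node \<times> node) set \<Rightarrow> node set" where
  "TL V A = {v\<in>V. is_leaf A v \<or> is_tree_node A v}"

definition vecset :: "node set \<Rightarrow> (node \<times> node) set \<Rightarrow> (nat \<Rightarrow> nat) set" where
  "vecset V A = mf V A ` TL V A"

definition ee :: "nat \<Rightarrow> nat \<Rightarrow> nat" where "ee k = (\<lambda>x. if x = k then 1 else 0)"

locale pnet =
  fixes n :: nat and V :: "node set" and A :: "(node \<times> node) set"
  assumes ph: "phylo_net n (V, A)"
begin

lemma finV: "finite V" and AVV: "A \<subseteq> V \<times> V" and acyc: "acyclic A"
  and uroot: "\<exists>!r. r \<in> V \<and> is_root A r"
  and types: "\<And>v. v \<in> V \<Longrightarrow> is_root A v \<or> is_leaf A v \<or> is_tree_node A v \<or> is_retic A v"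
  and leaf_iff: "\<And>v. v \<in> V \<Longrightarrow> is_leaf A v \<longleftrightarrow> (\<exists>i. v = Leaf i)"
  and labels: "{i. Leaf i \<in> V} \<subseteq> {1..n}"
  using ph unfolding phylo_net_def acyclic_def by auto

lemma finA: "finite A" using AVV finV by (meson finite_SigmaI finite_subset)

lemma arcV: "(u,v) \<in> A \<Longrightarrow> u \<in> V \<and> v \<in> V" using AVV by auto

lemma chs_V: "chs A u \<subseteq> V" and pars_V: "pars A u \<subseteq> V"
  using AVV by (auto simp: chs_def pars_def)

lemma fin_chs: "finite (chs A u)" using chs_V finV by (rule finite_subset)
lemma fin_pars: "finite (pars A u)" using pars_V finV by (rule finite_subset)

lemma indeg_pars: "indeg A v = card (pars A v)" by (simp add: indeg_def pars_def)
lemma outdeg_chs: "outdeg A v = card (chs A v)" by (simp add: outdeg_def chs_def)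

lemma leaf_struct: assumes "is_leaf A v" shows "chs A v = {}" "\<exists>p. pars A v = {p}"
  using assms fin_chs[of v] by (auto simp: is_leaf_def indeg_pars outdeg_chs card_1_singleton_iff)

lemma tree_struct: assumes "is_tree_node A v"
  shows "\<exists>p. pars A v = {p}" "\<exists>a b. a \<noteq> b \<and> chs A v = {a,b}"
  using assms by (auto simp: is_tree_node_def indeg_pars outdeg_chs card_1_singleton_iff card2_iff)

lemma retic_struct: assumes "is_retic A v"
  shows "\<exists>a b. a \<noteq> b \<and> pars A v = {a,b}" "\<exists>c. chs A v = {c}"
  using assms by (auto simp: is_retic_def indeg_pars outdeg_chs card_1_singleton_iff card2_iff)

lemma root_struct: assumes "is_root A v"
  shows "pars A v = {}" "\<exists>c. chs A v = {c}"
  using assms fin_pars[of v] by (auto simp: is_root_def indeg_pars outdeg_chs card_1_singleton_iff)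

lemma leaf_Leaf: "Leaf i \<in> V \<Longrightarrow> is_leaf A (Leaf i)" using leaf_iff by auto

lemma Leaf_chs: "Leaf i \<in> V \<Longrightarrow> chs A (Leaf i) = {}" using leaf_Leaf leaf_struct by auto

lemma label_range: "Leaf i \<in> V \<Longrightarrow> 1 \<le> i \<and> i \<le> n" using labels by auto

lemma wfc: "wf (A\<inverse>)" by (rule finite_acyclic_wf_converse[OF finA acyc])
lemma wfA: "wf A" by (rule finite_acyclic_wf[OF finA acyc])

lemma not_self: "(u,u) \<notin> A\<^sup>+" using acyc by (simp add: acyclic_def)

lemma npaths_add: "npaths A u v = (if u = v then 1 else 0) + (\<Sum>w\<in>chs A u. npaths A w v)"
proof (cases "u = v")
  case True
  have "\<And>w. w \<in> chs A u \<Longrightarrow> npaths A w v = 0"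
  proof -
    fix w assume "w \<in> chs A u"
    then have "(u,w) \<in> A" by (simp add: chs_def)
    then have "(w,u) \<notin> A\<^sup>*" using not_self[of u] by (meson rtrancl_into_trancl2)
    then show "npaths A w v = 0" using True npaths_zero[OF finA acyc] by simp
  qed
  then show ?thesis using True npaths_self[OF acyc] by simp
next
  case False then show ?thesis using npaths_rec[OF finA acyc] by simp
qed

lemma npaths_dual: "u \<noteq> v \<Longrightarrow> npaths A u v = (\<Sum>p\<in>pars A v. npaths A u p)"
proof -
  assume "u \<noteq> v"
  have "finite (A\<inverse>)" "acyclic (A\<inverse>)" using finA acyc by (auto simp: acyclic_converse)
  then have "npaths (A\<inverse>) v u = (\<Sum>w\<in>chs (A\<inverse>) v. npaths (A\<inverse>) w u)"
    using npaths_rec \<open>u \<noteq> v\<close> by metis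
  moreover have "chs (A\<inverse>) v = pars A v" by (auto simp: chs_def pars_def)
  ultimately show ?thesis by (simp add: npaths_conv[of A])
qed

lemma npaths_outside: assumes "u \<in> V" "v \<notin> V" shows "npaths A u v = 0"
proof -
  have "(u,v) \<notin> A\<^sup>*"
  proof
    assume "(u,v) \<in> A\<^sup>*"
    then show False using assms by (cases rule: rtranclE) (auto dest: arcV)
  qed
  then show ?thesis by (rule npaths_zero[OF finA acyc])
qed

lemma npaths_leafsrc: assumes "Leaf i \<in> V" "v \<noteq> Leaf i" shows "npaths A (Leaf i) v = 0"
  using npaths_add[of "Leaf i" v] Leaf_chs[OF assms(1)] assms(2) by simp

lemma mf_rec: assumes "u \<in> V" shows "mf V A u i = delta A u i + (\<Sum>w\<in>chs A u. mf V A w i)"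
proof (cases "i = 0")
  case True
  let ?R = "{h\<in>V. is_retic A h}"
  have "mf V A u i = (\<Sum>h\<in>?R. (if u = h then 1 else 0) + (\<Sum>w\<in>chs A u. npaths A w h))"
    using True by (simp add: mf_def npaths_add[of u])
  also have "\<dots> = (\<Sum>h\<in>?R. (if u = h then 1 else 0)) + (\<Sum>h\<in>?R. \<Sum>w\<in>chs A u. npaths A w h)"
    by (simp add: sum.distrib)
  also have "(\<Sum>h\<in>?R. (if u = h then 1 else 0)) = (if is_retic A u then 1 else 0)"
    using finV assms by (simp add: sum.delta)
  also have "(\<Sum>h\<in>?R. \<Sum>w\<in>chs A u. npaths A w h) = (\<Sum>w\<in>chs A u. mf V A w i)"
    using True by (simp add: mf_def sum.swap[of _ ?R])
  finally show ?thesis using True by (simp add: delta_def)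
next
  case False
  then show ?thesis by (simp add: mf_def delta_def npaths_add[of u])
qed

lemma mf_out: assumes "u \<in> V" "i \<noteq> 0" "Leaf i \<notin> V" shows "mf V A u i = 0"
proof -
  have "npaths A u (Leaf i) = 0" using npaths_outside assms by blast
  then show ?thesis using assms(2) unfolding mf_def by simp
qed

lemma mf_big: assumes "u \<in> V" "i > n" shows "mf V A u i = 0"
proof -
  have "Leaf i \<notin> V" using label_range assms(2) by (meson not_le)
  then show ?thesis using mf_out assms by simp
qed

lemma mf_Leaf: assumes "Leaf k \<in> V" shows "mf V A (Leaf k) = ee k"
proof
  fix i
  have nr: "\<not> is_retic A (Leaf k)" using leaf_Leaf[OF assms] by (simp add: is_leaf_def is_retic_def)
  have "k \<noteq> 0" using label_range[OF assms] by simp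
  show "mf V A (Leaf k) i = ee k i"
    using mf_rec[OF assms, of i] Leaf_chs[OF assms] nr \<open>k \<noteq> 0\<close> by (auto simp: delta_def ee_def)
qed

definition W :: "node \<Rightarrow> nat" where "W u = (\<Sum>i\<in>{1..n}. mf V A u i)"

lemma W_rec: assumes "u \<in> V" shows "W u = (if is_leaf A u then 1 else 0) + (\<Sum>w\<in>chs A u. W w)"
proof -
  have "W u = (\<Sum>i\<in>{1..n}. delta A u i) + (\<Sum>i\<in>{1..n}. \<Sum>w\<in>chs A u. mf V A w i)"
    unfolding W_def by (simp add: mf_rec[OF assms] sum.distrib)
  also have "(\<Sum>i\<in>{1..n}. delta A u i) = (\<Sum>i\<in>{1..n}. if u = Leaf i then 1 else 0)"
    by (rule sum.cong) (auto simp: delta_def)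
  also have "\<dots> = (if is_leaf A u then 1 else 0)"
  proof (cases "is_leaf A u")
    case True
    then obtain k where k: "u = Leaf k" using leaf_iff assms by auto
    then have "k \<in> {1..n}" using label_range assms by auto
    then show ?thesis using k True by (simp add: sum.delta)
  next
    case False
    then have "\<And>i. u \<noteq> Leaf i" using leaf_iff assms by auto
    then show ?thesis using False by simp
  qed
  also have "(\<Sum>i\<in>{1..n}. \<Sum>w\<in>chs A u. mf V A w i) = (\<Sum>w\<in>chs A u. W w)"
    unfolding W_def by (rule sum.swap)
  finally show ?thesis .
qed

lemma nonleaf_child: assumes "u \<in> V" "\<not> is_leaf A u" shows "chs A u \<noteq> {}"
  using types[OF assms(1)] assms(2) tree_struct retic_struct root_struct by fastforce

lemma W_pos: "u \<in> V \<Longrightarrow> W u \<ge> 1"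
proof (induction u rule: wf_induct_rule[OF wfc])
  case (1 u)
  show ?case
  proof (cases "is_leaf A u")
    case True then show ?thesis using W_rec[OF 1(2)] by simp
  next
    case False
    then obtain w where w: "w \<in> chs A u" using nonleaf_child[OF 1(2)] by auto
    then have "W w \<ge> 1" using 1(1)[of w] chs_V by (auto simp: chs_def)
    moreover have "W w \<le> (\<Sum>w\<in>chs A u. W w)" using w fin_chs by (intro member_le_sum) auto
    ultimately show ?thesis using W_rec[OF 1(2)] by simp
  qed
qed

lemma W_tree: assumes "u \<in> V" "is_tree_node A u" shows "W u \<ge> 2"
proof -
  obtain a b where ab: "a \<noteq> b" "chs A u = {a,b}" using tree_struct(2)[OF assms(2)] by auto
  have "a \<in> V" "b \<in> V" using ab chs_V by auto
  then have "W a \<ge> 1" "W b \<ge> 1" using W_pos by auto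
  moreover have "\<not> is_leaf A u" using assms(2) by (simp add: is_leaf_def is_tree_node_def)
  ultimately show ?thesis using W_rec[OF assms(1)] ab by simp
qed

end

context pnet begin

definition rt :: node where "rt = (THE r. r \<in> V \<and> is_root A r)"

lemma rt: "rt \<in> V" "is_root A rt"
  using theI'[OF uroot] unfolding rt_def by auto

lemma root_unique: "v \<in> V \<Longrightarrow> is_root A v \<Longrightarrow> v = rt"
  using uroot rt by blast

lemma nonroot_parent: assumes "v \<in> V" "\<not> is_root A v" shows "\<exists>p. (p,v) \<in> A"
proof -
  have "pars A v \<noteq> {}"
    using types[OF assms(1)] assms(2) leaf_struct tree_struct retic_struct by fastforce
  then show ?thesis by (auto simp: pars_def)
qed

lemma root_reach: "v \<in> V \<Longrightarrow> (rt, v) \<in> A\<^sup>*"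
proof (induction v rule: wf_induct_rule[OF wfA])
  case (1 v)
  show ?case
  proof (cases "is_root A v")
    case True then show ?thesis using root_unique 1 by simp
  next
    case False
    then obtain p where p: "(p,v) \<in> A" using nonroot_parent 1 by blast
    then have "(rt,p) \<in> A\<^sup>*" using 1 arcV by blast
    then show ?thesis using p by simp
  qed
qed

lemma has_parent_not_root: "(p,v) \<in> A \<Longrightarrow> \<not> is_root A v"
  using root_struct(1) by (auto simp: pars_def)

lemma leaf_not_root: "is_leaf A v \<Longrightarrow> \<not> is_root A v" and leaf_not_tree: "is_leaf A v \<Longrightarrow> \<not> is_tree_node A v"
  and leaf_not_retic: "is_leaf A v \<Longrightarrow> \<not> is_retic A v" and tree_not_retic: "is_tree_node A v \<Longrightarrow> \<not> is_retic A v"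
  and root_not_retic: "is_root A v \<Longrightarrow> \<not> is_retic A v"  and root_not_tree: "is_root A v \<Longrightarrow> \<not> is_tree_node A v"
  by (auto simp: is_leaf_def is_root_def is_tree_node_def is_retic_def)

lemma root_child: obtains c where "chs A rt = {c}" "c \<in> TL V A"
  "\<And>v. v \<in> V \<Longrightarrow> v \<noteq> rt \<Longrightarrow> (c, v) \<in> A\<^sup>*"
proof -
  obtain c where c: "chs A rt = {c}" using root_struct(2)[OF rt(2)] by auto
  then have rc: "(rt, c) \<in> A" by (auto simp: chs_def)
  have reach: "(c,v) \<in> A\<^sup>*" if vv: "v \<in> V" "v \<noteq> rt" for v
  proof -
    have "(rt, v) \<in> A\<^sup>*" using root_reach vv by simp
    then obtain w where "(rt, w) \<in> A" "(w, v) \<in> A\<^sup>*" using vv(2) by (cases rule: converse_rtranclE) auto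
    then show ?thesis using c by (auto simp: chs_def)
  qed
  have cV: "c \<in> V" using rc arcV by auto
  have nr: "\<not> is_root A c" using has_parent_not_root rc by blast
  have nh: "\<not> is_retic A c"
  proof
    assume "is_retic A c"
    then obtain a b where ab: "a \<noteq> b" "pars A c = {a,b}" using retic_struct by blast
    then obtain x where x: "x \<in> pars A c" "x \<noteq> rt" by blast
    then have "(x, c) \<in> A" "x \<in> V" using arcV by (auto simp: pars_def)
    moreover then have "(c, x) \<in> A\<^sup>*" using reach x by blast
    ultimately have "(c,c) \<in> A\<^sup>+" by (meson rtrancl_into_trancl1)
    then show False using not_self by blast
  qed
  have "c \<in> TL V A" using types[OF cV] nr nh cV by (auto simp: TL_def)
  then show ?thesis using that c reach by blast
qed

lemma TL_cases: "v \<in> TL V A \<Longrightarrow> v \<in> V \<and> \<not> is_retic A v \<and> \<not> is_root A v"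
  by (auto simp: TL_def is_leaf_def is_root_def is_tree_node_def is_retic_def)

lemma mf_tree: assumes "v \<in> V" "is_tree_node A v" "chs A v = {a,b}" "a \<noteq> b"
  shows "mf V A v x = mf V A a x + mf V A b x"
proof -
  have "delta A v x = 0" using assms leaf_iff[OF assms(1)] leaf_not_tree tree_not_retic
    by (auto simp: delta_def)
  then show ?thesis using mf_rec[OF assms(1), of x] assms by simp
qed

lemma mf_retic: assumes "v \<in> V" "is_retic A v" "chs A v = {c}"
  shows "mf V A v x = ee 0 x + mf V A c x"
proof -
  have "\<not> is_leaf A v" using assms leaf_not_retic by blast
  then have "delta A v x = ee 0 x" using assms leaf_iff[OF assms(1)] by (auto simp: delta_def ee_def)
  then show ?thesis using mf_rec[OF assms(1), of x] assms by simp
qed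

lemma child_nonroot: "c \<in> chs A u \<Longrightarrow> \<not> is_root A c"
  using has_parent_not_root by (auto simp: chs_def)

lemma small_child_leaf: assumes "c \<in> chs A u" "W c = 1" "mf V A c 0 = 0"
  shows "\<exists>k. c = Leaf k \<and> Leaf k \<in> V"
proof -
  have cV: "c \<in> V" using assms(1) chs_V by auto
  have "\<not> is_root A c" using child_nonroot assms(1) by blast
  moreover have "\<not> is_tree_node A c" using W_tree[OF cV] assms(2) by auto
  moreover have "\<not> is_retic A c"
  proof
    assume "is_retic A c"
    then have "delta A c 0 = 1" by (simp add: delta_def)
    then show False using mf_rec[OF cV, of 0] assms(3) by simp
  qed
  ultimately have "is_leaf A c" using types[OF cV] by blast
  then show ?thesis using leaf_iff cV by auto
qed

lemma W_mf: "W u = (\<Sum>i\<in>{1..n}. mf V A u i)" by (simp add: W_def)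

lemma leaf_vec_unique: assumes "t \<in> TL V A" "mf V A t = ee k" "k \<noteq> 0" shows "t = Leaf k"
proof -
  have tV: "t \<in> V" using assms TL_cases by auto
  have kn: "k \<le> n"
  proof (rule ccontr)
    assume "\<not> k \<le> n" then have "mf V A t k = 0" using mf_big tV by simp
    then show False using assms(2) by (simp add: ee_def)
  qed
  have "W t = 1" using assms(2) kn assms(3) by (simp add: W_def ee_def sum.delta)
  then have "\<not> is_tree_node A t" using W_tree tV by fastforce
  then have "is_leaf A t" using assms(1) by (simp add: TL_def)
  then obtain m where m: "t = Leaf m" using leaf_iff tV by auto
  then have "ee m = ee k" using mf_Leaf tV assms(2) by simp
  then have "ee m k = 1" by (simp add: ee_def)
  then have "m = k" by (simp add: ee_def split: if_splits)
  then show ?thesis using m by simp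
qed

end

lemma ee_one: "ee k x = 1 \<longleftrightarrow> x = k" by (simp add: ee_def)

context pnet begin

lemma parent_of_child: assumes "c \<in> chs A u" "pars A c = {p}" shows "parent A c = u" "p = u"
proof -
  have "u \<in> pars A c" using assms(1) by (simp add: chs_def pars_def)
  then show "p = u" using assms(2) by simp
  then show "parent A c = u" using parent_eq[OF assms(2)] by simp
qed

lemma leaf_pars_ex: "Leaf i \<in> V \<Longrightarrow> \<exists>p. pars A (Leaf i) = {p}"
  using leaf_Leaf leaf_struct by blast

lemma cherry_struct: assumes "is_cherry (V,A) (i,j)"
  obtains p g where "pars A (Leaf i) = {p}" "pars A (Leaf j) = {p}" "chs A p = {Leaf i, Leaf j}"
    "is_tree_node A p" "pars A p = {g}" "p \<in> V" "i \<noteq> j" "Leaf i \<in> V" "Leaf j \<in> V"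
proof -
  have ij: "i \<noteq> j" "Leaf i \<in> V" "Leaf j \<in> V" "parent A (Leaf i) = parent A (Leaf j)"
    using assms by (auto simp: is_cherry_def)
  obtain p1 where p1: "pars A (Leaf i) = {p1}" using leaf_pars_ex ij by blast
  obtain p2 where p2: "pars A (Leaf j) = {p2}" using leaf_pars_ex ij by blast
  have "p1 = p2" using parent_eq[OF p1] parent_eq[OF p2] ij by simp
  then have pp: "pars A (Leaf j) = {p1}" using p2 by simp
  have a: "(p1, Leaf i) \<in> A" "(p1, Leaf j) \<in> A" using p1 pp by (auto simp: pars_def)
  then have pV: "p1 \<in> V" using arcV by blast
  have sub: "{Leaf i, Leaf j} \<subseteq> chs A p1" using a by (auto simp: chs_def)
  have "card {Leaf i, Leaf j} = 2" using ij by simp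
  then have c2: "card (chs A p1) \<ge> 2" using card_mono[OF fin_chs sub] by simp
  have tr: "is_tree_node A p1"
    using types[OF pV] c2 by (auto simp: is_root_def is_leaf_def is_retic_def outdeg_chs)
  obtain x y where xy: "x \<noteq> y" "chs A p1 = {x,y}" using tree_struct(2)[OF tr] by blast
  have ch: "chs A p1 = {Leaf i, Leaf j}" using sub xy ij by auto
  obtain g where "pars A p1 = {g}" using tree_struct(1)[OF tr] by blast
  then show ?thesis using that p1 pp ch tr pV ij by blast
qed

lemma ret_cherry_struct: assumes "is_ret_cherry (V,A) (i,j)"
  obtains pi pj q g where "pars A (Leaf i) = {pi}" "pars A (Leaf j) = {pj}" "is_retic A pi"
    "is_tree_node A pj" "pars A pi = {pj, q}" "pj \<noteq> q" "chs A pi = {Leaf i}"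
    "chs A pj = {Leaf j, pi}" "pars A pj = {g}" "pi \<in> V" "pj \<in> V" "q \<in> V" "g \<in> V"
    "i \<noteq> j" "Leaf i \<in> V" "Leaf j \<in> V"
proof -
  have ij: "i \<noteq> j" "Leaf i \<in> V" "Leaf j \<in> V" "is_retic A (parent A (Leaf i))"
    "is_tree_node A (parent A (Leaf j))" "(parent A (Leaf j), parent A (Leaf i)) \<in> A"
    using assms by (auto simp: is_ret_cherry_def)
  obtain pi where pi: "pars A (Leaf i) = {pi}" using leaf_pars_ex ij by blast
  obtain pj where pj: "pars A (Leaf j) = {pj}" using leaf_pars_ex ij by blast
  have e: "parent A (Leaf i) = pi" "parent A (Leaf j) = pj" using parent_eq pi pj by auto
  have h: "is_retic A pi" "is_tree_node A pj" "(pj, pi) \<in> A" using ij e by auto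
  have ai: "(pi, Leaf i) \<in> A" "(pj, Leaf j) \<in> A" using pi pj by (auto simp: pars_def)
  have V: "pi \<in> V" "pj \<in> V" using h(3) arcV by auto
  obtain a b where ab: "a \<noteq> b" "pars A pi = {a,b}" using retic_struct(1)[OF h(1)] by blast
  have "pj \<in> pars A pi" using h(3) by (simp add: pars_def)
  then obtain q where q: "pars A pi = {pj, q}" "pj \<noteq> q" using ab by auto
  have qV: "q \<in> V" using q pars_V by auto
  obtain c where c: "chs A pi = {c}" using retic_struct(2)[OF h(1)] by blast
  have ci: "chs A pi = {Leaf i}" using c ai by (auto simp: chs_def)
  obtain x y where xy: "x \<noteq> y" "chs A pj = {x,y}" using tree_struct(2)[OF h(2)] by blast
  have "Leaf j \<noteq> pi" using h(1) leaf_Leaf ij leaf_not_retic by blast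
  then have c2: "card {Leaf j, pi} = 2" by simp
  have sb: "{Leaf j, pi} \<subseteq> chs A pj" using ai h(3) by (auto simp: chs_def)
  have "card (chs A pj) = 2" using xy by simp
  then have cj: "chs A pj = {Leaf j, pi}" using card_seteq[OF fin_chs sb] c2 by simp
  obtain g where g: "pars A pj = {g}" using tree_struct(1)[OF h(2)] by blast
  have gV: "g \<in> V" using g pars_V by auto
  show ?thesis using that pi pj h q ci cj g V qV gV ij by blast
qed

lemma ee_sum2: assumes "ka \<noteq> kb" "i \<noteq> j" "\<forall>x. ee ka x + ee kb x = ee i x + ee j x"
  shows "(ka = i \<and> kb = j) \<or> (ka = j \<and> kb = i)"
proof -
  have "ee ka i + ee kb i = 1" "ee ka j + ee kb j = 1" using assms(2,3) by (auto simp: ee_def)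
  then show ?thesis using assms(1,2) unfolding ee_def
    by (cases "ka = i"; cases "kb = i"; cases "ka = j"; cases "kb = j") simp_all
qed

lemma vec_index_le: assumes "u \<in> V" "mf V A u i \<noteq> 0" "i \<noteq> 0" shows "i \<le> n"
proof (rule ccontr)
  assume "\<not> i \<le> n" then have "mf V A u i = 0" using mf_big[OF assms(1)] by simp
  then show False using assms(2) by simp
qed

lemma W2: assumes "i \<le> n" "j \<le> n" "i \<noteq> j" "i \<noteq> 0" "j \<noteq> 0" "\<forall>x\<in>{1..n}. c x = 0"
  "mf V A u = (\<lambda>x. c x + ee i x + ee j x)" shows "W u = 2"
proof -
  have "W u = (\<Sum>x\<in>{1..n}. c x) + (\<Sum>x\<in>{1..n}. ee i x) + (\<Sum>x\<in>{1..n}. ee j x)"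
    unfolding W_def assms(7) by (simp add: sum.distrib)
  also have "(\<Sum>x\<in>{1..n}. c x) = 0" using assms(6) by simp
  also have "(\<Sum>x\<in>{1..n}. ee i x) = 1" using assms(1,4) unfolding ee_def by (subst sum.delta) auto
  also have "(\<Sum>x\<in>{1..n}. ee j x) = 1" using assms(2,5) unfolding ee_def by (subst sum.delta) auto
  finally show ?thesis by simp
qed

lemma detect_cherry: assumes "u \<in> TL V A" "mf V A u = (\<lambda>x. ee i x + ee j x)" "i \<noteq> j" "i \<noteq> 0" "j \<noteq> 0"
  shows "is_cherry (V,A) (i,j)"
proof -
  have uV: "u \<in> V" using assms(1) TL_cases by blast
  have mfx: "mf V A u x = ee i x + ee j x" for x using assms(2) by simp
  have mi: "mf V A u i = 1" "mf V A u j = 1" "mf V A u 0 = 0" using assms(3-5) by (simp_all add: mfx ee_def)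
  have nl: "\<not> is_leaf A u"
  proof
    assume "is_leaf A u"
    then obtain k where k: "u = Leaf k" using leaf_iff uV by auto
    have kV: "Leaf k \<in> V" using uV k by simp
    have e: "mf V A u = ee k" unfolding k by (rule mf_Leaf[OF kV])
    have "ee k i = 1" "ee k j = 1" using mi e by simp_all
    then have "i = k" "j = k" unfolding ee_one by auto
    then show False using assms(3) by simp
  qed
  then have tr: "is_tree_node A u" using assms(1) by (simp add: TL_def)
  obtain a b where ab: "a \<noteq> b" "chs A u = {a,b}" using tree_struct(2)[OF tr] by blast
  have sm: "mf V A a x + mf V A b x = ee i x + ee j x" for x
    using mf_tree[OF uV tr ab(2) ab(1), of x] mfx[of x] by simp
  have "i \<le> n" "j \<le> n" using vec_index_le[OF uV, of i] vec_index_le[OF uV, of j] mi assms(4,5) by simp_all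
  then have "W u = 2" using W2[of i j "\<lambda>_. 0" u] assms(2-5) by simp
  moreover have "W u = W a + W b" using W_rec[OF uV] nl ab by simp
  moreover have "W a \<ge> 1" "W b \<ge> 1" using W_pos ab chs_V by auto
  ultimately have W1: "W a = 1" "W b = 1" by auto
  have z: "mf V A a 0 = 0" "mf V A b 0 = 0" using sm[of 0] assms(4,5) by (auto simp: ee_def)
  have inch: "a \<in> chs A u" "b \<in> chs A u" using ab by auto
  obtain ka where ka: "a = Leaf ka" "Leaf ka \<in> V" using small_child_leaf[OF inch(1) W1(1) z(1)] by blast
  obtain kb where kb: "b = Leaf kb" "Leaf kb \<in> V" using small_child_leaf[OF inch(2) W1(2) z(2)] by blast
  have ma: "mf V A a = ee ka" unfolding ka(1) by (rule mf_Leaf[OF ka(2)])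
  have mb: "mf V A b = ee kb" unfolding kb(1) by (rule mf_Leaf[OF kb(2)])
  have "\<forall>x. ee ka x + ee kb x = ee i x + ee j x"
  proof
    fix x show "ee ka x + ee kb x = ee i x + ee j x" using sm[of x] unfolding ma mb .
  qed
  moreover have "ka \<noteq> kb" using ab ka kb by auto
  ultimately have kk: "(ka = i \<and> kb = j) \<or> (ka = j \<and> kb = i)" using ee_sum2 assms(3) by blast
  then have L: "Leaf i \<in> chs A u" "Leaf j \<in> chs A u" "Leaf i \<in> V" "Leaf j \<in> V" using ab ka kb by auto
  obtain p where p: "pars A (Leaf i) = {p}" using leaf_pars_ex L by blast
  obtain p' where p': "pars A (Leaf j) = {p'}" using leaf_pars_ex L by blast
  have "parent A (Leaf i) = u" "parent A (Leaf j) = u" using parent_of_child L p p' by auto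
  then show ?thesis using L assms(3) by (simp add: is_cherry_def)
qed

lemma detect_ret: assumes "u \<in> TL V A" "mf V A u = (\<lambda>x. ee 0 x + ee i x + ee j x)" "i \<noteq> j" "i \<noteq> 0" "j \<noteq> 0"
  shows "is_ret_cherry (V,A) (i,j) \<or> is_ret_cherry (V,A) (j,i)"
proof -
  have uV: "u \<in> V" using assms(1) TL_cases by blast
  have mfx: "mf V A u x = ee 0 x + ee i x + ee j x" for x using assms(2) by simp
  have mi: "mf V A u i = 1" "mf V A u j = 1" "mf V A u 0 = 1" using assms(3-5) by (simp_all add: mfx ee_def)
  have nl: "\<not> is_leaf A u"
  proof
    assume "is_leaf A u"
    then obtain k where k: "u = Leaf k" using leaf_iff uV by auto
    have kV: "Leaf k \<in> V" using uV k by simp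
    have e: "mf V A u = ee k" unfolding k by (rule mf_Leaf[OF kV])
    have "ee k i = 1" "ee k j = 1" using mi e by simp_all
    then have "i = k" "j = k" unfolding ee_one by auto
    then show False using assms(3) by simp
  qed
  then have tr: "is_tree_node A u" using assms(1) by (simp add: TL_def)
  obtain a b where ab: "a \<noteq> b" "chs A u = {a,b}" using tree_struct(2)[OF tr] by blast
  have sm: "mf V A a x + mf V A b x = ee 0 x + ee i x + ee j x" for x
    using mf_tree[OF uV tr ab(2) ab(1), of x] mfx[of x] by simp
  have "i \<le> n" "j \<le> n" using vec_index_le[OF uV, of i] vec_index_le[OF uV, of j] mi assms(4,5) by simp_all
  then have "W u = 2" using W2[of i j "ee 0" u] assms(2-5) by (simp add: ee_def)
  moreover have "W u = W a + W b" using W_rec[OF uV] nl ab by simp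
  moreover have "W a \<ge> 1" "W b \<ge> 1" using W_pos ab chs_V by auto
  ultimately have W1: "W a = 1" "W b = 1" by auto
  have z: "mf V A a 0 + mf V A b 0 = 1" using sm[of 0] assms(4,5) by (auto simp: ee_def)
  have key: "is_ret_cherry (V,A) (i,j) \<or> is_ret_cherry (V,A) (j,i)"
    if k: "chs A u = {a',b'}" "a' \<noteq> b'" "\<And>x. mf V A a' x + mf V A b' x = ee 0 x + ee i x + ee j x"
      "W a' = 1" "W b' = 1" "mf V A a' 0 = 0" "mf V A b' 0 = 1" for a' b'
  proof -
    have inch: "a' \<in> chs A u" "b' \<in> chs A u" using k by auto
    obtain ka where ka: "a' = Leaf ka" "Leaf ka \<in> V" using small_child_leaf[OF inch(1) k(4) k(6)] by blast
    have bV: "b' \<in> V" using inch chs_V by auto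
    have "\<not> is_root A b'" using child_nonroot inch by blast
    moreover have "\<not> is_tree_node A b'" using W_tree[OF bV] k(5) by auto
    moreover have "\<not> is_leaf A b'"
    proof
      assume "is_leaf A b'"
      then obtain kb where kb: "b' = Leaf kb" "Leaf kb \<in> V" using leaf_iff bV by auto
      have "mf V A b' = ee kb" unfolding kb(1) by (rule mf_Leaf[OF kb(2)])
      moreover have "kb \<noteq> 0" using label_range[OF kb(2)] by simp
      ultimately show False using k(7) by (simp add: ee_def)
    qed
    ultimately have rb: "is_retic A b'" using types[OF bV] by blast
    obtain c where c: "chs A b' = {c}" using retic_struct(2)[OF rb] by blast
    have mb: "\<And>x. mf V A b' x = ee 0 x + mf V A c x" using mf_retic[OF bV rb c] .
    have c0: "mf V A c 0 = 0" using mb[of 0] k(7) by (simp add: ee_def)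
    have "W b' = W c" using W_rec[OF bV] c rb leaf_not_retic by auto
    then have Wc: "W c = 1" using k(5) by simp
    have cch: "c \<in> chs A b'" using c by simp
    obtain kc where kc: "c = Leaf kc" "Leaf kc \<in> V" using small_child_leaf[OF cch Wc c0] by blast
    have "\<forall>x. ee ka x + ee kc x = ee i x + ee j x"
    proof
      fix x show "ee ka x + ee kc x = ee i x + ee j x"
        using k(3)[of x] mb[of x] mf_Leaf[OF ka(2)] mf_Leaf[OF kc(2)] unfolding ka(1) kc(1) by simp
    qed
    moreover have "ka \<noteq> kc"
    proof
      assume "ka = kc"
      obtain p where p: "pars A (Leaf ka) = {p}" using leaf_pars_ex ka by blast
      have "p = u" using parent_of_child(2)[OF _ p] inch ka by simp
      moreover have "p = b'" using parent_of_child(2)[OF _ p] cch kc \<open>ka = kc\<close> by simp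
      ultimately show False using inch(2) rb tr tree_not_retic by auto
    qed
    ultimately have kk: "(ka = i \<and> kc = j) \<or> (ka = j \<and> kc = i)" using ee_sum2 assms(3) by blast
    obtain p where p: "pars A (Leaf ka) = {p}" using leaf_pars_ex ka by blast
    obtain p' where p': "pars A (Leaf kc) = {p'}" using leaf_pars_ex kc by blast
    have par: "parent A (Leaf ka) = u" "parent A (Leaf kc) = b'"
      using parent_of_child(1)[OF _ p] parent_of_child(1)[OF _ p'] inch cch ka kc by auto
    have ub: "(u, b') \<in> A" using inch by (simp add: chs_def)
    have "is_ret_cherry (V,A) (kc, ka)"
      using par ub rb tr ka kc \<open>ka \<noteq> kc\<close> by (auto simp: is_ret_cherry_def)
    then show ?thesis using kk by auto
  qed
  show ?thesis
  proof (cases "mf V A a 0 = 0")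
    case True
    then show ?thesis using key[OF ab(2) ab(1) sm W1] z by simp
  next
    case False
    then have "mf V A b 0 = 0" "mf V A a 0 = 1" using z by auto
    moreover have "chs A u = {b,a}" using ab by auto
    ultimately show ?thesis using key[of b a] ab sm W1 by (simp add: add.commute)
  qed
qed

lemma ret_orient1: assumes "is_ret_cherry (V,A) (i,j)" "x \<in> TL V A" "x \<noteq> Leaf j"
  shows "mf V A x j \<le> mf V A x i"
proof -
  obtain pi pj q g where s: "pars A (Leaf i) = {pi}" "pars A (Leaf j) = {pj}" "is_retic A pi"
    "is_tree_node A pj" "pars A pi = {pj, q}" "pj \<noteq> q" "chs A pi = {Leaf i}"
    "chs A pj = {Leaf j, pi}" "pars A pj = {g}" "pi \<in> V" "pj \<in> V" "q \<in> V" "g \<in> V"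
    "i \<noteq> j" "Leaf i \<in> V" "Leaf j \<in> V" using ret_cherry_struct[OF assms(1)] by blast
  have i0: "i \<noteq> 0" "j \<noteq> 0" using label_range[OF s(15)] label_range[OF s(16)] by auto
  have xV: "x \<in> V" using assms(2) TL_cases by blast
  show ?thesis
  proof (cases "x = Leaf i")
    case True
    have "mf V A (Leaf i) = ee i" by (rule mf_Leaf[OF s(15)])
    then show ?thesis using True s(14) by (simp add: ee_def)
  next
    case False
    have "x \<noteq> pi" using assms(2) s(3) TL_cases by blast
    then have "mf V A x i = npaths A x pj + npaths A x q"
      using npaths_dual[OF False] s(1,5,6) npaths_dual[of x pi] i0 by (simp add: mf_def)
    moreover have "mf V A x j = npaths A x pj" using npaths_dual[OF assms(3)] s(2) i0 by (simp add: mf_def)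
    ultimately show ?thesis by simp
  qed
qed

lemma ret_orient2: assumes "is_ret_cherry (V,A) (i,j)"
  shows "\<exists>t\<in>TL V A. \<not> is_leaf A t \<and> mf V A t j < mf V A t i"
proof -
  obtain pi pj q g where s: "pars A (Leaf i) = {pi}" "pars A (Leaf j) = {pj}" "is_retic A pi"
    "is_tree_node A pj" "pars A pi = {pj, q}" "pj \<noteq> q" "chs A pi = {Leaf i}"
    "chs A pj = {Leaf j, pi}" "pars A pj = {g}" "pi \<in> V" "pj \<in> V" "q \<in> V" "g \<in> V"
    "i \<noteq> j" "Leaf i \<in> V" "Leaf j \<in> V" using ret_cherry_struct[OF assms(1)] by blast
  have i0: "i \<noteq> 0" "j \<noteq> 0" using label_range[OF s(15)] label_range[OF s(16)] by auto
  obtain c where c: "chs A rt = {c}" "c \<in> TL V A" "\<And>v. v \<in> V \<Longrightarrow> v \<noteq> rt \<Longrightarrow> (c, v) \<in> A\<^sup>*"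
    using root_child by blast
  have qpi: "(q, pi) \<in> A" using s(5) by (auto simp: pars_def)
  have "q \<noteq> rt"
  proof
    assume "q = rt"
    then have "pi = c" using c(1) qpi by (auto simp: chs_def)
    then show False using c(2) s(3) TL_cases by blast
  qed
  then have cq: "(c, q) \<in> A\<^sup>*" using c(3) s(12) by blast
  have cnl: "\<not> is_leaf A c"
  proof
    assume "is_leaf A c"
    then have cc: "chs A c = {}" using leaf_struct by blast
    have "c = q" using cq by (cases rule: converse_rtranclE) (use cc in \<open>auto simp: chs_def\<close>)
    then show False using \<open>is_leaf A c\<close> leaf_struct(1) qpi by (auto simp: chs_def)
  qed
  have cV: "c \<in> V" using c(2) TL_cases by blast
  have ci: "c \<noteq> Leaf i" "c \<noteq> Leaf j" using cnl leaf_Leaf s by auto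
  have "c \<noteq> pi" using c(2) s(3) TL_cases by blast
  then have "mf V A c i = npaths A c pj + npaths A c q"
    using npaths_dual[OF ci(1)] s(1,5,6) npaths_dual[of c pi] i0 by (simp add: mf_def)
  moreover have "mf V A c j = npaths A c pj" using npaths_dual[OF ci(2)] s(2) i0 by (simp add: mf_def)
  moreover have "npaths A c q > 0" using npaths_pos_iff[OF finA acyc] cq by simp
  ultimately show ?thesis using c(2) cnl by auto
qed

end

lemma indeg_eq: "indeg B v = card (pars B v)" by (simp add: indeg_def pars_def)
lemma outdeg_eq: "outdeg B v = card (chs B v)" by (simp add: outdeg_def chs_def)

lemma chs_mod: "chs (B - Rm \<union> Ad) v = (chs B v - chs Rm v) \<union> chs Ad v"
  by (auto simp: chs_def)
lemma pars_mod: "pars (B - Rm \<union> Ad) v = (pars B v - pars Rm v) \<union> pars Ad v"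
  by (auto simp: pars_def)

lemma fin_chs_gen: "finite B \<Longrightarrow> finite (chs B v)"
  by (rule finite_subset[of _ "snd ` B"]) (force simp: chs_def)+
lemma fin_pars_gen: "finite B \<Longrightarrow> finite (pars B v)"
  by (rule finite_subset[of _ "fst ` B"]) (force simp: pars_def)+

lemma card_chs_mod: assumes "finite B" "finite Ad" "Rm \<subseteq> B" "Ad \<inter> B = {}"
  "card (chs Rm v) = card (chs Ad v)"
  shows "card (chs (B - Rm \<union> Ad) v) = card (chs B v)"
proof -
  have s: "chs Rm v \<subseteq> chs B v" using assms(3) by (auto simp: chs_def)
  have d: "(chs B v - chs Rm v) \<inter> chs Ad v = {}" using assms(4) by (auto simp: chs_def)
  have f: "finite (chs B v)" "finite (chs Ad v)" using assms fin_chs_gen by auto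
  have "card (chs (B - Rm \<union> Ad) v) = card (chs B v - chs Rm v) + card (chs Ad v)"
    unfolding chs_mod using d f by (simp add: card_Un_disjoint)
  also have "\<dots> = card (chs B v) - card (chs Rm v) + card (chs Ad v)"
    using s f by (simp add: card_Diff_subset finite_subset)
  also have "\<dots> = card (chs B v)" using assms(5) card_mono[OF f(1) s] by simp
  finally show ?thesis .
qed

lemma card_pars_mod: assumes "finite B" "finite Ad" "Rm \<subseteq> B" "Ad \<inter> B = {}"
  "card (pars Rm v) = card (pars Ad v)"
  shows "card (pars (B - Rm \<union> Ad) v) = card (pars B v)"
proof -
  have s: "pars Rm v \<subseteq> pars B v" using assms(3) by (auto simp: pars_def)
  have d: "(pars B v - pars Rm v) \<inter> pars Ad v = {}" using assms(4) by (auto simp: pars_def)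
  have f: "finite (pars B v)" "finite (pars Ad v)" using assms fin_pars_gen by auto
  have "card (pars (B - Rm \<union> Ad) v) = card (pars B v - pars Rm v) + card (pars Ad v)"
    unfolding pars_mod using d f by (simp add: card_Un_disjoint)
  also have "\<dots> = card (pars B v) - card (pars Rm v) + card (pars Ad v)"
    using s f by (simp add: card_Diff_subset finite_subset)
  also have "\<dots> = card (pars B v)" using assms(5) card_mono[OF f(1) s] by simp
  finally show ?thesis .
qed

context pnet begin

lemma phylo_mod:
  assumes "V' \<subseteq> V" "Rm \<subseteq> A" "Ad \<inter> A = {}" "finite Ad" "A - Rm \<union> Ad \<subseteq> V' \<times> V'"
    "Ad \<subseteq> A\<^sup>+" "rt \<in> V'"
    "\<And>v. v \<in> V' \<Longrightarrow> card (chs Rm v) = card (chs Ad v) \<and> card (pars Rm v) = card (pars Ad v)"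
  shows "phylo_net n (V', A - Rm \<union> Ad)"
proof -
  let ?A' = "A - Rm \<union> Ad"
  have deg: "indeg ?A' v = indeg A v \<and> outdeg ?A' v = outdeg A v" if "v \<in> V'" for v
    using card_chs_mod[OF finA assms(4,2,3)] card_pars_mod[OF finA assms(4,2,3)] assms(8)[OF that]
    by (simp add: indeg_eq outdeg_eq)
  have ty: "(is_root ?A' v = is_root A v) \<and> (is_leaf ?A' v = is_leaf A v) \<and>
     (is_tree_node ?A' v = is_tree_node A v) \<and> (is_retic ?A' v = is_retic A v)" if "v \<in> V'" for v
    using deg[OF that] by (simp add: is_root_def is_leaf_def is_tree_node_def is_retic_def)
  have sub: "?A' \<subseteq> A\<^sup>+" using assms(6) by auto
  have acy: "(v, v) \<notin> ?A'\<^sup>+" for v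
  proof
    assume "(v,v) \<in> ?A'\<^sup>+"
    then have "(v,v) \<in> (A\<^sup>+)\<^sup>+" using trancl_mono[OF _ sub] by blast
    then show False using not_self by simp
  qed
  have VV: "v \<in> V" if "v \<in> V'" for v using that assms(1) by auto
  have ex: "\<exists>!r. r \<in> V' \<and> is_root ?A' r"
  proof
    show "rt \<in> V' \<and> is_root ?A' rt" using assms(7) ty rt by auto
    fix r assume "r \<in> V' \<and> is_root ?A' r"
    then show "r = rt" using ty VV root_unique by auto
  qed
  show ?thesis unfolding phylo_net_def
    using finite_subset[OF assms(1) finV] assms(5) acy ex ty types VV leaf_iff labels assms(1)
    by auto
qed

end

lemma iso_lift:
  assumes bij: "bij_betw f V1' V2'"
    and arc': "\<forall>u\<in>V1'. \<forall>v\<in>V1'. (u,v) \<in> A1' \<longleftrightarrow> (f u, f v) \<in> A2'"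
    and A1V: "A1' \<subseteq> V1' \<times> V1'" and A2V: "A2' \<subseteq> V2' \<times> V2'"
    and V1: "V1 = V1' \<union> X1" "V1' \<inter> X1 = {}" and V2: "V2 = V2' \<union> X2" "V2' \<inter> X2 = {}"
    and bh: "bij_betw h X1 X2"
    and F: "F = (\<lambda>x. if x \<in> X1 then h x else f x)"
    and c1: "\<And>u v. (u,v) \<in> A1 \<longleftrightarrow> ((u,v) \<in> A1' \<and> (u,v) \<notin> D1) \<or> (u,v) \<in> E1"
    and c2: "\<And>u v. (u,v) \<in> A2 \<longleftrightarrow> ((u,v) \<in> A2' \<and> (u,v) \<notin> D2) \<or> (u,v) \<in> E2"
    and DE: "D1 \<subseteq> V1 \<times> V1" "E1 \<subseteq> V1 \<times> V1"
    and mD: "(\<lambda>(x,y). (F x, F y)) ` D1 = D2" and mE: "(\<lambda>(x,y). (F x, F y)) ` E1 = E2"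
  shows "bij_betw F V1 V2 \<and> (\<forall>u\<in>V1. \<forall>v\<in>V1. (u,v) \<in> A1 \<longleftrightarrow> (F u, F v) \<in> A2)"
proof
  have e1: "\<And>x. x \<in> V1' \<Longrightarrow> F x = f x" using V1(2) by (auto simp: F)
  have b1: "bij_betw F V1' V2'" using bij_betw_cong[of V1' F f V2', OF e1] bij by simp
  have e2: "\<And>x. x \<in> X1 \<Longrightarrow> F x = h x" by (auto simp: F)
  have b2: "bij_betw F X1 X2" using bij_betw_cong[of X1 F h X2, OF e2] bh by simp
  show bF: "bij_betw F V1 V2" unfolding V1(1) V2(1) using bij_betw_combine[OF b1 b2 V2(2)] .
  have inj: "inj_on F V1" using bF bij_betw_def by blast
  have memD: "(u,v) \<in> D1 \<longleftrightarrow> (F u, F v) \<in> D2" if "u \<in> V1" "v \<in> V1" for u v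
  proof
    assume "(u,v) \<in> D1" then show "(F u, F v) \<in> D2" using mD by force
  next
    assume "(F u, F v) \<in> D2"
    then obtain x y where "(x,y) \<in> D1" "F x = F u" "F y = F v" using mD by force
    moreover then have "x \<in> V1" "y \<in> V1" using DE by auto
    ultimately show "(u,v) \<in> D1" using inj that by (metis inj_onD)
  qed
  have memE: "(u,v) \<in> E1 \<longleftrightarrow> (F u, F v) \<in> E2" if "u \<in> V1" "v \<in> V1" for u v
  proof
    assume "(u,v) \<in> E1" then show "(F u, F v) \<in> E2" using mE by force
  next
    assume "(F u, F v) \<in> E2"
    then obtain x y where "(x,y) \<in> E1" "F x = F u" "F y = F v" using mE by force
    moreover then have "x \<in> V1" "y \<in> V1" using DE by auto
    ultimately show "(u,v) \<in> E1" using inj that by (metis inj_onD)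
  qed
  have memA: "(u,v) \<in> A1' \<longleftrightarrow> (F u, F v) \<in> A2'" if "u \<in> V1" "v \<in> V1" for u v
  proof (cases "u \<in> V1' \<and> v \<in> V1'")
    case True
    then show ?thesis using arc' V1(2) by (auto simp: F)
  next
    case False
    then have "(u,v) \<notin> A1'" using A1V by auto
    moreover have "F u \<notin> V2' \<or> F v \<notin> V2'"
    proof -
      have "u \<in> X1 \<or> v \<in> X1" using False that V1(1) by auto
      then have "F u \<in> X2 \<or> F v \<in> X2" using bh by (auto simp: F bij_betw_def)
      then show ?thesis using V2(2) by auto
    qed
    then have "(F u, F v) \<notin> A2'" using A2V by auto
    ultimately show ?thesis by simp
  qed
  show "\<forall>u\<in>V1. \<forall>v\<in>V1. (u,v) \<in> A1 \<longleftrightarrow> (F u, F v) \<in> A2"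
    using memA memD memE c1 c2 by simp
qed


lemma char_mod: "Rm \<subseteq> B \<Longrightarrow> Ad \<inter> B = {} \<Longrightarrow>
   (u,v) \<in> B \<longleftrightarrow> ((u,v) \<in> B - Rm \<union> Ad \<and> (u,v) \<notin> Ad) \<or> (u,v) \<in> Rm"
  by auto

locale cherry = pnet +
  fixes i j :: nat and p g :: node
  assumes cs: "pars A (Leaf i) = {p}" "pars A (Leaf j) = {p}" "chs A p = {Leaf i, Leaf j}"
    "is_tree_node A p" "pars A p = {g}" "p \<in> V" "i \<noteq> j" "Leaf i \<in> V" "Leaf j \<in> V"
begin

definition "Vc = V - {Leaf i, p}"
definition "Rmc = {(p, Leaf i), (p, Leaf j), (g, p)}"
definition "Adc = {(g, Leaf j)}"
definition "Ac = A - Rmc \<union> Adc"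

lemma arcs: "(p, Leaf i) \<in> A" "(p, Leaf j) \<in> A" "(g, p) \<in> A"
  using cs by (auto simp: pars_def)

lemma gV: "g \<in> V" using arcs arcV by blast

lemma neqs: "g \<noteq> p" "g \<noteq> Leaf i" "g \<noteq> Leaf j" "p \<noteq> Leaf i" "p \<noteq> Leaf j" "Leaf i \<noteq> Leaf j"
proof -
  show "g \<noteq> p" using arcs(3) not_self by blast
  show "g \<noteq> Leaf i" using arcs(3) Leaf_chs[OF cs(8)] by (auto simp: chs_def)
  show "g \<noteq> Leaf j" using arcs(3) Leaf_chs[OF cs(9)] by (auto simp: chs_def)
  show "p \<noteq> Leaf i" using arcs(1) not_self by blast
  show "p \<noteq> Leaf j" using arcs(2) not_self by blast
  show "Leaf i \<noteq> Leaf j" using cs(7) by simp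
qed

lemma gj_notin: "(g, Leaf j) \<notin> A" using cs(2) neqs(1) by (auto simp: pars_def)

lemma reduce_eq: "reduce (V,A) (i,j) = (Vc, Ac)"
proof -
  have pe: "parent A (Leaf i) = p" "parent A (Leaf j) = p" using parent_eq cs by auto
  have ic: "is_cherry (V,A) (i,j)" using pe cs by (simp add: is_cherry_def)
  let ?A1 = "A - {(p, Leaf i)}"
  have "pars ?A1 p = {g}" using cs(5) neqs by (auto simp: pars_def)
  then have pa: "parent ?A1 p = g" by (rule parent_eq)
  have "chs ?A1 p = {Leaf j}" using cs(3) neqs by (auto simp: chs_def)
  then have ch: "child ?A1 p = Leaf j" by (rule child_eq)
  show ?thesis
    unfolding reduce_def using ic pe pa ch
    by (auto simp: suppress_def Vc_def Ac_def Rmc_def Adc_def Let_def)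
qed

lemma Ac_sub: "Ac \<subseteq> Vc \<times> Vc"
proof
  fix x assume "x \<in> Ac"
  obtain u v where x: "x = (u,v)" by (cases x)
  have uv: "((u,v) \<in> A \<and> (u,v) \<notin> Rmc) \<or> (u,v) = (g, Leaf j)"
    using \<open>x \<in> Ac\<close> x by (auto simp: Ac_def Adc_def)
  show "x \<in> Vc \<times> Vc"
  proof (cases "(u,v) = (g, Leaf j)")
    case True then show ?thesis using x gV cs neqs by (auto simp: Vc_def)
  next
    case False
    then have a: "(u,v) \<in> A" "(u,v) \<notin> Rmc" using uv by auto
    have "u \<noteq> Leaf i" using a Leaf_chs[OF cs(8)] by (auto simp: chs_def)
    moreover have "u \<noteq> p" using a cs(3) by (auto simp: chs_def Rmc_def)
    moreover have "v \<noteq> Leaf i" using a cs(1) by (auto simp: pars_def Rmc_def)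
    moreover have "v \<noteq> p" using a cs(5) by (auto simp: pars_def Rmc_def)
    ultimately show ?thesis using x a arcV by (auto simp: Vc_def)
  qed
qed

lemma rt_Vc: "rt \<in> Vc"
proof -
  have "rt \<noteq> Leaf i"
  proof
    assume "rt = Leaf i"
    then show False using rt(2) leaf_not_root[OF leaf_Leaf[OF cs(8)]] by simp
  qed
  moreover have "rt \<noteq> p" using rt cs(4) root_not_tree by blast
  ultimately show ?thesis using rt by (simp add: Vc_def)
qed

lemma degc: assumes "v \<in> Vc"
  shows "card (chs Rmc v) = card (chs Adc v) \<and> card (pars Rmc v) = card (pars Adc v)"
proof -
  have v: "v \<noteq> p" "v \<noteq> Leaf i" using assms by (auto simp: Vc_def)
  have "chs Rmc v = (if v = g then {p} else {})" "chs Adc v = (if v = g then {Leaf j} else {})"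
    "pars Rmc v = (if v = Leaf j then {p} else {})" "pars Adc v = (if v = Leaf j then {g} else {})"
    using v by (auto simp: chs_def pars_def Rmc_def Adc_def)
  then show ?thesis by simp
qed

lemma fins: "finite Adc" "Rmc \<subseteq> A" "Adc \<inter> A = {}"
  using arcs gj_notin by (auto simp: Adc_def Rmc_def)

lemma phc: "phylo_net n (Vc, Ac)"
  unfolding Ac_def
proof (rule phylo_mod)
  show "Vc \<subseteq> V" by (auto simp: Vc_def)
  show "A - Rmc \<union> Adc \<subseteq> Vc \<times> Vc" using Ac_sub by (simp add: Ac_def)
  show "Adc \<subseteq> A\<^sup>+" using arcs by (auto simp: Adc_def intro: trancl_into_trancl)
qed (use fins rt_Vc degc in auto)

lemma pnc: "pnet n Vc Ac" using phc by (simp add: pnet_def)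

lemma degeq: assumes "v \<in> Vc" shows "indeg Ac v = indeg A v" "outdeg Ac v = outdeg A v"
  using card_chs_mod[OF finA fins(1,2,3)] card_pars_mod[OF finA fins(1,2,3)] degc[OF assms]
  by (simp_all add: indeg_eq outdeg_eq Ac_def)

lemma tyeq: assumes "v \<in> Vc"
  shows "is_root Ac v = is_root A v" "is_leaf Ac v = is_leaf A v"
    "is_tree_node Ac v = is_tree_node A v" "is_retic Ac v = is_retic A v"
  using degeq[OF assms] by (simp_all add: is_root_def is_leaf_def is_tree_node_def is_retic_def)

lemma chs_Ac: "v \<in> Vc \<Longrightarrow> chs Ac v = (if v = g then chs A g - {p} \<union> {Leaf j} else chs A v)"
  unfolding Ac_def chs_mod by (auto simp: chs_def Rmc_def Adc_def Vc_def)

lemma npaths_c: "u \<in> Vc \<Longrightarrow> v \<in> Vc \<Longrightarrow> npaths Ac u v = npaths A u v"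
proof (induction u rule: wf_induct_rule[OF pnet.wfc[OF pnc]])
  case (1 u)
  show ?case
  proof (cases "u = v")
    case True
    then show ?thesis using npaths_self[OF acyc] npaths_self[OF pnet.acyc[OF pnc]] by simp
  next
    case False
    have "npaths Ac u v = (\<Sum>w\<in>chs Ac u. npaths Ac w v)"
      using npaths_rec[OF pnet.finA[OF pnc] pnet.acyc[OF pnc] False] .
    also have "\<dots> = (\<Sum>w\<in>chs Ac u. npaths A w v)"
    proof (rule sum.cong)
      fix w assume w: "w \<in> chs Ac u"
      then have "w \<in> Vc" using Ac_sub by (auto simp: chs_def)
      then show "npaths Ac w v = npaths A w v" using 1 w by (auto simp: chs_def)
    qed simp
    also have "\<dots> = npaths A u v"
    proof (cases "u = g")
      case True
      have fin: "finite (chs A g)" by (rule fin_chs)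
      have pin: "p \<in> chs A g" using arcs by (simp add: chs_def)
      have jn: "Leaf j \<notin> chs A g - {p}" using gj_notin by (simp add: chs_def)
      have "(\<Sum>w\<in>chs Ac u. npaths A w v) = (\<Sum>w\<in>chs A g - {p}. npaths A w v) + npaths A (Leaf j) v"
        using True chs_Ac[OF 1(2)] fin jn by (simp add: sum.insert_if)
      moreover have "npaths A u v = (\<Sum>w\<in>chs A g - {p}. npaths A w v) + npaths A p v"
        using npaths_rec[OF finA acyc False] True sum.remove[OF fin pin] by (simp add: add.commute)
      moreover have "npaths A p v = npaths A (Leaf i) v + npaths A (Leaf j) v"
        using npaths_rec[OF finA acyc, of p v] cs(3) neqs 1(3) by (auto simp: Vc_def)
      moreover have "npaths A (Leaf i) v = 0" using npaths_leafsrc[OF cs(8)] 1(3) by (auto simp: Vc_def)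
      ultimately show ?thesis by simp
    next
      case False
      then show ?thesis using chs_Ac[OF 1(2)] npaths_rec[OF finA acyc \<open>u \<noteq> v\<close>] by simp
    qed
    finally show ?thesis .
  qed
qed

lemma retics_eq: "{h\<in>Vc. is_retic Ac h} = {h\<in>V. is_retic A h}"
proof -
  have "\<not> is_retic A (Leaf i)" using leaf_Leaf[OF cs(8)] leaf_not_retic by blast
  moreover have "\<not> is_retic A p" using cs(4) tree_not_retic by blast
  ultimately show ?thesis using tyeq(4) by (auto simp: Vc_def)
qed

lemma mf_c: assumes "u \<in> Vc" shows "mf Vc Ac u = (mf V A u)(i := 0)"
proof
  fix k
  have uV: "u \<in> V" using assms by (simp add: Vc_def)
  show "mf Vc Ac u k = ((mf V A u)(i := 0)) k"
  proof (cases "k = 0")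
    case True
    have "mf Vc Ac u k = (\<Sum>h\<in>{h\<in>V. is_retic A h}. npaths Ac u h)"
      using True retics_eq by (simp add: mf_def)
    also have "\<dots> = (\<Sum>h\<in>{h\<in>V. is_retic A h}. npaths A u h)"
      by (rule sum.cong) (use retics_eq npaths_c[OF assms] in auto)
    finally show ?thesis using True label_range[OF cs(8)] by (simp add: mf_def)
  next
    case False
    show ?thesis
    proof (cases "k = i")
      case True
      have "Leaf i \<notin> Vc" by (simp add: Vc_def)
      then show ?thesis using pnet.mf_out[OF pnc assms] True False by simp
    next
      case ki: False
      show ?thesis
      proof (cases "Leaf k \<in> Vc")
        case True
        then show ?thesis using npaths_c[OF assms True] False ki by (simp add: mf_def)
      next
        case nk: False
        have "Leaf k \<noteq> p" using cs(4) leaf_iff[OF cs(6)] leaf_not_tree by blast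
        then have "Leaf k \<notin> V" using nk ki by (auto simp: Vc_def)
        then show ?thesis using pnet.mf_out[OF pnc assms False nk] mf_out[OF uV False] ki by simp
      qed
    qed
  qed
qed

lemma TL_c: "TL Vc Ac = TL V A - {Leaf i, p}"
  using tyeq by (auto simp: TL_def Vc_def)

lemma zero_not_vec: assumes "u \<in> Vc" shows "mf Vc Ac u \<noteq> (\<lambda>_. 0)"
proof
  assume "mf Vc Ac u = (\<lambda>_. 0)"
  then have "pnet.W n Vc Ac u = 0" by (simp add: pnet.W_def[OF pnc])
  then show False using pnet.W_pos[OF pnc assms] by simp
qed

lemma vecset_c: "vecset Vc Ac = (\<lambda>f. f(i := 0)) ` vecset V A - {\<lambda>_. 0}"
proof
  show "vecset Vc Ac \<subseteq> (\<lambda>f. f(i := 0)) ` vecset V A - {\<lambda>_. 0}"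
  proof
    fix y assume "y \<in> vecset Vc Ac"
    then obtain u where u: "u \<in> TL Vc Ac" "y = mf Vc Ac u" by (auto simp: vecset_def)
    then have uc: "u \<in> Vc" by (simp add: TL_def)
    have "y = (mf V A u)(i := 0)" using u mf_c[OF uc] by simp
    moreover have "mf V A u \<in> vecset V A" using u TL_c by (auto simp: vecset_def)
    moreover have "y \<noteq> (\<lambda>_. 0)" using zero_not_vec[OF uc] u by simp
    ultimately show "y \<in> (\<lambda>f. f(i := 0)) ` vecset V A - {\<lambda>_. 0}" by auto
  qed
  show "(\<lambda>f. f(i := 0)) ` vecset V A - {\<lambda>_. 0} \<subseteq> vecset Vc Ac"
  proof
    fix y assume "y \<in> (\<lambda>f. f(i := 0)) ` vecset V A - {\<lambda>_. 0}"
    then obtain u where u: "u \<in> TL V A" "y = (mf V A u)(i := 0)" "y \<noteq> (\<lambda>_. 0)"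
      by (auto simp: vecset_def)
    have mi: "mf V A (Leaf i) = ee i" "mf V A (Leaf j) = ee j" using mf_Leaf cs by auto
    show "y \<in> vecset Vc Ac"
    proof (cases "u = Leaf i")
      case True
      then have "y = (\<lambda>_. 0)" using u(2) mi by (auto simp: ee_def)
      then show ?thesis using u(3) by simp
    next
      case nLi: False
      show ?thesis
      proof (cases "u = p")
        case True
        have "mf V A p x = ee i x + ee j x" for x
          using mf_tree[OF cs(6) cs(4) cs(3) neqs(6)] mi by simp
        then have "y = ee j" using u(2) True cs(7) by (auto simp: ee_def)
        also have "ee j = mf Vc Ac (Leaf j)"
          using mf_c[of "Leaf j"] mi cs neqs by (auto simp: Vc_def ee_def)
        finally have "y = mf Vc Ac (Leaf j)" .
        moreover have "Leaf j \<in> TL Vc Ac" using TL_c cs leaf_Leaf neqs by (auto simp: TL_def)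
        ultimately show ?thesis by (simp add: vecset_def)
      next
        case False
        then have "u \<in> TL Vc Ac" using u(1) nLi TL_c by auto
        moreover then have "y = mf Vc Ac u" using mf_c u(2) by (simp add: TL_def)
        ultimately show ?thesis by (simp add: vecset_def)
      qed
    qed
  qed
qed

lemma char_c: "(u,v) \<in> A \<longleftrightarrow> ((u,v) \<in> Ac \<and> (u,v) \<notin> Adc) \<or> (u,v) \<in> Rmc"
  unfolding Ac_def using char_mod[OF fins(2,3)] by blast

lemma V_split: "V = Vc \<union> {p, Leaf i}" "Vc \<inter> {p, Leaf i} = {}"
  using cs by (auto simp: Vc_def)

lemma pars_Ac_j: "pars Ac (Leaf j) = {g}"
  using cs(2) neqs by (auto simp: pars_def Ac_def Rmc_def Adc_def)

end

lemma cherry_of: assumes "pnet n V A" "is_cherry (V,A) (i,j)" shows "\<exists>p g. cherry n V A i j p g"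
proof -
  obtain p g where "pars A (Leaf i) = {p}" "pars A (Leaf j) = {p}" "chs A p = {Leaf i, Leaf j}"
    "is_tree_node A p" "pars A p = {g}" "p \<in> V" "i \<noteq> j" "Leaf i \<in> V" "Leaf j \<in> V"
    using pnet.cherry_struct[OF assms] by blast
  then show ?thesis using assms(1) by (intro exI) (simp add: cherry_def cherry_axioms_def)
qed


definition TT :: "nat \<Rightarrow> nat \<Rightarrow> (nat \<Rightarrow> nat) \<Rightarrow> nat \<Rightarrow> nat" where
  "TT i j f = f(0 := f 0 - f i, i := f i - f j)"

lemma arith3: "(Sa::nat) + Sb = Sc \<Longrightarrow> Sa + (if P then 1 else 0) + (if Q then 0 else 0) +
   (Sb + (if P then 0 else 0) + (if Q then 1 else 0)) = Sc + (if P then 1 else 0) + (if Q then 1 else 0)"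
  by auto

locale retch = pnet +
  fixes i j :: nat and pi pj q g :: node
  assumes rs: "pars A (Leaf i) = {pi}" "pars A (Leaf j) = {pj}" "is_retic A pi"
    "is_tree_node A pj" "pars A pi = {pj, q}" "pj \<noteq> q" "chs A pi = {Leaf i}"
    "chs A pj = {Leaf j, pi}" "pars A pj = {g}" "pi \<in> V" "pj \<in> V" "q \<in> V" "g \<in> V"
    "i \<noteq> j" "Leaf i \<in> V" "Leaf j \<in> V"
begin

definition "Vr = V - {pi, pj}"
definition "Rmr = {(pj, pi), (q, pi), (pi, Leaf i), (g, pj), (pj, Leaf j)}"
definition "Adr = {(q, Leaf i), (g, Leaf j)}"
definition "Ar = A - Rmr \<union> Adr"

lemma arcs: "(pj, pi) \<in> A" "(q, pi) \<in> A" "(pi, Leaf i) \<in> A" "(g, pj) \<in> A" "(pj, Leaf j) \<in> A"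
  using rs by (auto simp: pars_def)

lemma i0: "i \<noteq> 0" "j \<noteq> 0" using label_range[OF rs(15)] label_range[OF rs(16)] by auto

lemma neqs: "pi \<noteq> pj" "pi \<noteq> Leaf i" "pi \<noteq> Leaf j" "pj \<noteq> Leaf i" "pj \<noteq> Leaf j"
  "q \<noteq> pi" "g \<noteq> pj" "q \<noteq> Leaf i" "q \<noteq> Leaf j" "g \<noteq> Leaf i" "g \<noteq> Leaf j" "g \<noteq> pi"
  "Leaf i \<noteq> Leaf j"
proof -
  show "pi \<noteq> pj" using rs(3,4) tree_not_retic by blast
  show "pi \<noteq> Leaf i" using rs(3) leaf_Leaf[OF rs(15)] leaf_not_retic by blast
  show "pi \<noteq> Leaf j" using rs(3) leaf_Leaf[OF rs(16)] leaf_not_retic by blast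
  show "pj \<noteq> Leaf i" using rs(4) leaf_Leaf[OF rs(15)] leaf_not_tree by blast
  show "pj \<noteq> Leaf j" using rs(4) leaf_Leaf[OF rs(16)] leaf_not_tree by blast
  show "q \<noteq> pi" using arcs(2) not_self by blast
  show "g \<noteq> pj" using arcs(4) not_self by blast
  show "q \<noteq> Leaf i" using arcs(2) Leaf_chs[OF rs(15)] by (auto simp: chs_def)
  show "q \<noteq> Leaf j" using arcs(2) Leaf_chs[OF rs(16)] by (auto simp: chs_def)
  show "g \<noteq> Leaf i" using arcs(4) Leaf_chs[OF rs(15)] by (auto simp: chs_def)
  show "g \<noteq> Leaf j" using arcs(4) Leaf_chs[OF rs(16)] by (auto simp: chs_def)
  show "g \<noteq> pi"
  proof
    assume "g = pi"
    then have "(pi, pi) \<in> A\<^sup>+" using arcs(1,4) by auto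
    then show False using not_self by blast
  qed
  show "Leaf i \<noteq> Leaf j" using rs(14) by simp
qed

lemma dpi: "(u, pi) \<in> A \<Longrightarrow> u = pj \<or> u = q" using rs(5) by (auto simp: pars_def)
lemma dpj: "(u, pj) \<in> A \<Longrightarrow> u = g" using rs(9) by (auto simp: pars_def)
lemma dLi: "(u, Leaf i) \<in> A \<Longrightarrow> u = pi" using rs(1) by (auto simp: pars_def)
lemma dLj: "(u, Leaf j) \<in> A \<Longrightarrow> u = pj" using rs(2) by (auto simp: pars_def)
lemma cpi: "(pi, w) \<in> A \<Longrightarrow> w = Leaf i" using rs(7) by (auto simp: chs_def)
lemma cpj: "(pj, w) \<in> A \<Longrightarrow> w = Leaf j \<or> w = pi" using rs(8) by (auto simp: chs_def)

lemma notin: "(q, Leaf i) \<notin> A" "(g, Leaf j) \<notin> A"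
  using rs(1,2) neqs by (auto simp: pars_def)

lemma reduce_eq: "reduce (V,A) (i,j) = (Vr, Ar)"
proof -
  have pe: "parent A (Leaf i) = pi" "parent A (Leaf j) = pj" using parent_eq rs by auto
  have nc: "\<not> is_cherry (V,A) (i,j)" using pe neqs by (simp add: is_cherry_def)
  have rc: "is_ret_cherry (V,A) (i,j)" using pe rs arcs by (simp add: is_ret_cherry_def)
  let ?A1 = "A - {(pj, pi)}"
  have "pars ?A1 pi = {q}" using rs(5,6) by (auto simp: pars_def)
  then have pa1: "parent ?A1 pi = q" by (rule parent_eq)
  have "chs ?A1 pi = {Leaf i}" using rs(7) neqs by (auto simp: chs_def)
  then have ch1: "child ?A1 pi = Leaf i" by (rule child_eq)
  let ?A2 = "?A1 - {(q, pi), (pi, Leaf i)} \<union> {(q, Leaf i)}"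
  have s1: "suppress (V, ?A1) pi = (V - {pi}, ?A2)" using pa1 ch1 by (simp add: suppress_def)
  have "pars ?A2 pj = {g}" using rs(9) neqs by (auto simp: pars_def)
  then have pa2: "parent ?A2 pj = g" by (rule parent_eq)
  have "chs ?A2 pj = {Leaf j}" using rs(8,6) neqs by (auto simp: chs_def)
  then have ch2: "child ?A2 pj = Leaf j" by (rule child_eq)
  have s2: "suppress (V - {pi}, ?A2) pj = (V - {pi} - {pj}, ?A2 - {(g, pj), (pj, Leaf j)} \<union> {(g, Leaf j)})"
    using pa2 ch2 by (simp add: suppress_def)
  have "?A2 - {(g, pj), (pj, Leaf j)} \<union> {(g, Leaf j)} = Ar"
    using neqs by (auto simp: Ar_def Rmr_def Adr_def)
  moreover have "V - {pi} - {pj} = Vr" by (auto simp: Vr_def)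
  ultimately show ?thesis unfolding reduce_def using nc rc pe s1 s2 by (simp add: Let_def)
qed

lemma Ar_sub: "Ar \<subseteq> Vr \<times> Vr"
proof
  fix x assume "x \<in> Ar"
  obtain u v where x: "x = (u,v)" by (cases x)
  have uv: "((u,v) \<in> A \<and> (u,v) \<notin> Rmr) \<or> (u,v) = (q, Leaf i) \<or> (u,v) = (g, Leaf j)"
    using \<open>x \<in> Ar\<close> x by (auto simp: Ar_def Adr_def)
  show "x \<in> Vr \<times> Vr"
  proof (cases "(u,v) \<in> A \<and> (u,v) \<notin> Rmr")
    case False then show ?thesis using uv x rs neqs by (auto simp: Vr_def)
  next
    case True
    then have a: "(u,v) \<in> A" "(u,v) \<notin> Rmr" by auto
    have "u \<noteq> pi" using a rs(7) by (auto simp: chs_def Rmr_def)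
    moreover have "u \<noteq> pj" using a rs(8) by (auto simp: chs_def Rmr_def)
    moreover have "v \<noteq> pi" using a rs(5) by (auto simp: pars_def Rmr_def)
    moreover have "v \<noteq> pj" using a rs(9) by (auto simp: pars_def Rmr_def)
    ultimately show ?thesis using x a arcV by (auto simp: Vr_def)
  qed
qed

lemma rt_Vr: "rt \<in> Vr"
proof -
  have "rt \<noteq> pi" using rt(2) rs(3) root_not_retic by blast
  moreover have "rt \<noteq> pj" using rt(2) rs(4) root_not_tree by blast
  ultimately show ?thesis using rt by (simp add: Vr_def)
qed

lemma degr: assumes "v \<in> Vr"
  shows "card (chs Rmr v) = card (chs Adr v) \<and> card (pars Rmr v) = card (pars Adr v)"
proof -
  have v: "v \<noteq> pi" "v \<noteq> pj" using assms by (auto simp: Vr_def)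
  have e: "chs Rmr v = (if v = q then {pi} else {}) \<union> (if v = g then {pj} else {})"
    "chs Adr v = (if v = q then {Leaf i} else {}) \<union> (if v = g then {Leaf j} else {})"
    "pars Rmr v = (if v = Leaf i then {pi} else {}) \<union> (if v = Leaf j then {pj} else {})"
    "pars Adr v = (if v = Leaf i then {q} else {}) \<union> (if v = Leaf j then {g} else {})"
    using v by (auto simp: chs_def pars_def Rmr_def Adr_def)
  show ?thesis unfolding e using neqs by (cases "v = q"; cases "v = g"; cases "v = Leaf i"; cases "v = Leaf j") auto
qed

lemma fins: "finite Adr" "Rmr \<subseteq> A" "Adr \<inter> A = {}"
  using arcs notin by (auto simp: Adr_def Rmr_def)

lemma phr: "phylo_net n (Vr, Ar)"
  unfolding Ar_def
proof (rule phylo_mod)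
  show "Vr \<subseteq> V" by (auto simp: Vr_def)
  show "A - Rmr \<union> Adr \<subseteq> Vr \<times> Vr" using Ar_sub by (simp add: Ar_def)
  show "Adr \<subseteq> A\<^sup>+" using arcs by (auto simp: Adr_def intro: trancl_into_trancl)
qed (use fins rt_Vr degr in auto)

lemma pnr: "pnet n Vr Ar" using phr by (simp add: pnet_def)

lemma degeq: assumes "v \<in> Vr" shows "indeg Ar v = indeg A v" "outdeg Ar v = outdeg A v"
  using card_chs_mod[OF finA fins(1,2,3)] card_pars_mod[OF finA fins(1,2,3)] degr[OF assms]
  by (simp_all add: indeg_eq outdeg_eq Ar_def)

lemma tyeq: assumes "v \<in> Vr"
  shows "is_root Ar v = is_root A v" "is_leaf Ar v = is_leaf A v"
    "is_tree_node Ar v = is_tree_node A v" "is_retic Ar v = is_retic A v"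
  using degeq[OF assms] by (simp_all add: is_root_def is_leaf_def is_tree_node_def is_retic_def)

lemma pi_in_chs: "u \<in> Vr \<Longrightarrow> pi \<in> chs A u \<longleftrightarrow> u = q"
  using arcs by (auto simp: chs_def Vr_def dest: dpi)
lemma pj_in_chs: "u \<in> Vr \<Longrightarrow> pj \<in> chs A u \<longleftrightarrow> u = g"
  using arcs by (auto simp: chs_def Vr_def dest: dpj)

lemma chs_Ar: assumes "u \<in> Vr" shows "chs Ar u = (chs A u - {pi, pj}) \<union> (if u = q then {Leaf i} else {}) \<union> (if u = g then {Leaf j} else {})"
proof -
  have "chs Rmr u = chs A u \<inter> {pi, pj}"
    using assms pi_in_chs[OF assms] pj_in_chs[OF assms] by (auto simp: chs_def Rmr_def Vr_def)
  moreover have "chs Adr u = (if u = q then {Leaf i} else {}) \<union> (if u = g then {Leaf j} else {})"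
    by (auto simp: chs_def Adr_def)
  ultimately show ?thesis unfolding Ar_def chs_mod by auto
qed

lemma sum_A: assumes "u \<in> Vr"
  shows "(\<Sum>w\<in>chs A u. F w) = (\<Sum>w\<in>chs A u - {pi, pj}. F w) + (if u = q then F pi else 0) + (if u = g then F pj else 0)"
proof -
  have fin: "finite (chs A u)" by (rule fin_chs)
  let ?S = "chs A u \<inter> {pi, pj}"
  have S: "?S = (if u = q then {pi} else {}) \<union> (if u = g then {pj} else {})"
    using pi_in_chs[OF assms] pj_in_chs[OF assms] by auto
  have "(\<Sum>w\<in>chs A u. F w) = (\<Sum>w\<in>chs A u - ?S. F w) + (\<Sum>w\<in>?S. F w)"
    by (rule sum.subset_diff) (use fin in auto)
  moreover have "chs A u - ?S = chs A u - {pi, pj}" by auto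
  ultimately have "(\<Sum>w\<in>chs A u. F w) = (\<Sum>w\<in>chs A u - {pi, pj}. F w) + (\<Sum>w\<in>?S. F w)" by simp
  also have "(\<Sum>w\<in>?S. F w) = (if u = q then F pi else 0) + (if u = g then F pj else 0)"
    unfolding S using neqs(1) by (auto simp: add.commute)
  finally show ?thesis by (simp add: add.assoc)
qed

lemma sum_Ar: assumes "u \<in> Vr"
  shows "(\<Sum>w\<in>chs Ar u. F w) = (\<Sum>w\<in>chs A u - {pi, pj}. F w) + (if u = q then F (Leaf i) else 0) + (if u = g then F (Leaf j) else 0)"
proof -
  have fin: "finite (chs A u - {pi, pj})" using fin_chs by simp
  have ni: "Leaf i \<notin> chs A u - {pi, pj}" "Leaf j \<notin> chs A u - {pi, pj}"
    using assms by (auto simp: chs_def Vr_def dest: dLi dLj)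
  show ?thesis unfolding chs_Ar[OF assms] using fin ni neqs(13)
    by (cases "u = q"; cases "u = g") (simp_all add: sum.insert_if add_ac)
qed

lemma S0_sub: "u \<in> Vr \<Longrightarrow> w \<in> chs A u - {pi, pj} \<Longrightarrow> w \<in> chs Ar u"
  using chs_Ar by auto

lemma npaths_A_pi: "v \<noteq> pi \<Longrightarrow> npaths A pi v = npaths A (Leaf i) v"
  using npaths_rec[OF finA acyc, of pi v] rs(7) by simp
lemma npaths_A_pj: assumes "v \<noteq> pj" shows "npaths A pj v = npaths A (Leaf j) v + npaths A pi v"
proof -
  have "npaths A pj v = (\<Sum>w\<in>{Leaf j, pi}. npaths A w v)"
    using npaths_rec[OF finA acyc assms[symmetric]] rs(8) by simp
  also have "\<dots> = npaths A (Leaf j) v + npaths A pi v"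
    using neqs(3) by (simp add: sum.insert_if)
  finally show ?thesis .
qed

lemma npaths_r: "u \<in> Vr \<Longrightarrow> (\<forall>v\<in>Vr. v \<noteq> Leaf i \<longrightarrow> npaths Ar u v = npaths A u v) \<and>
    npaths Ar u (Leaf i) + npaths A u pj = npaths A u (Leaf i)"
proof (induction u rule: wf_induct_rule[OF pnet.wfc[OF pnr]])
  case (1 u)
  have IH: "(\<forall>v\<in>Vr. v \<noteq> Leaf i \<longrightarrow> npaths Ar w v = npaths A w v) \<and>
    npaths Ar w (Leaf i) + npaths A w pj = npaths A w (Leaf i)" if w: "w \<in> chs Ar u" for w
  proof -
    have "(u,w) \<in> Ar" using w by (simp add: chs_def)
    then have "w \<in> Vr" "(w,u) \<in> Ar\<inverse>" using Ar_sub by auto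
    then show ?thesis by (rule 1(1)[rotated])
  qed
  have IH1: "npaths Ar w v' = npaths A w v'" if "w \<in> chs A u - {pi,pj}" "v' \<in> Vr" "v' \<noteq> Leaf i" for w v'
    using IH[OF S0_sub[OF 1(2) that(1)]] that(2,3) by blast
  have IH2: "npaths Ar w (Leaf i) + npaths A w pj = npaths A w (Leaf i)" if "w \<in> chs A u - {pi,pj}" for w
    using IH[OF S0_sub[OF 1(2) that(1)]] by blast
  have Li: "Leaf i \<in> Vr" "Leaf j \<in> Vr" using rs neqs by (auto simp: Vr_def)
  have part1: "npaths Ar u v = npaths A u v" if v: "v \<in> Vr" "v \<noteq> Leaf i" for v
  proof (cases "u = v")
    case True
    then show ?thesis using npaths_self[OF acyc] npaths_self[OF pnet.acyc[OF pnr]] by simp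
  next
    case False
    have vpi: "v \<noteq> pi" "v \<noteq> pj" using v by (auto simp: Vr_def)
    have z: "npaths A (Leaf i) v = 0" using npaths_leafsrc[OF rs(15)] v by simp
    have r1: "npaths Ar (Leaf i) v = npaths A pi v"
      using pnet.npaths_leafsrc[OF pnr Li(1)] npaths_A_pi[OF vpi(1)] z v by simp
    have r2: "npaths Ar (Leaf j) v = npaths A pj v"
    proof (cases "v = Leaf j")
      case True
      then show ?thesis using npaths_A_pj[OF vpi(2)] npaths_A_pi[OF vpi(1)] z
        npaths_self[OF acyc] npaths_self[OF pnet.acyc[OF pnr]] by simp
    next
      case False
      then show ?thesis using npaths_A_pj[OF vpi(2)] npaths_A_pi[OF vpi(1)] z
        npaths_leafsrc[OF rs(16) False] pnet.npaths_leafsrc[OF pnr Li(2) False] by simp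
    qed
    have sS: "(\<Sum>w\<in>chs A u - {pi, pj}. npaths Ar w v) = (\<Sum>w\<in>chs A u - {pi, pj}. npaths A w v)"
      by (rule sum.cong) (simp_all add: IH1 v)
    show ?thesis
      unfolding npaths_rec[OF pnet.finA[OF pnr] pnet.acyc[OF pnr] False] npaths_rec[OF finA acyc False]
        sum_Ar[OF 1(2)] sum_A[OF 1(2)] r1 r2 sS by (rule refl)
  qed
  have part2: "npaths Ar u (Leaf i) + npaths A u pj = npaths A u (Leaf i)"
  proof (cases "u = Leaf i")
    case True
    then show ?thesis using npaths_self[OF acyc] npaths_self[OF pnet.acyc[OF pnr]]
      npaths_leafsrc[OF rs(15), of pj] neqs by simp
  next
    case False
    have upj: "u \<noteq> pj" using 1(2) by (simp add: Vr_def)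
    have a1: "npaths Ar (Leaf i) (Leaf i) = 1" using npaths_self[OF pnet.acyc[OF pnr]] by simp
    have a2: "npaths Ar (Leaf j) (Leaf i) = 0" using pnet.npaths_leafsrc[OF pnr Li(2)] neqs by simp
    have a3: "npaths A pi pj = 0"
    proof (rule npaths_zero[OF finA acyc])
      show "(pi, pj) \<notin> A\<^sup>*"
      proof
        assume "(pi, pj) \<in> A\<^sup>*"
        then have "(pi, pi) \<in> A\<^sup>+" using arcs(1) by simp
        then show False using not_self by blast
      qed
    qed
    have a4: "npaths A pj pj = 1" using npaths_self[OF acyc] by simp
    have a5: "npaths A pi (Leaf i) = 1" using npaths_A_pi[OF neqs(2)[symmetric]] npaths_self[OF acyc] by simp
    have a6: "npaths A pj (Leaf i) = 1" using npaths_A_pj[OF neqs(4)[symmetric]] a5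
        npaths_leafsrc[OF rs(16), of "Leaf i"] neqs by simp
    have e1: "npaths Ar u (Leaf i) = (\<Sum>w\<in>chs A u - {pi, pj}. npaths Ar w (Leaf i))
        + (if u = q then 1 else 0) + (if u = g then 0 else 0)"
      unfolding npaths_rec[OF pnet.finA[OF pnr] pnet.acyc[OF pnr] False] sum_Ar[OF 1(2)] a1 a2 by (rule refl)
    have e2: "npaths A u pj = (\<Sum>w\<in>chs A u - {pi, pj}. npaths A w pj)
        + (if u = q then 0 else 0) + (if u = g then 1 else 0)"
      unfolding npaths_rec[OF finA acyc upj] sum_A[OF 1(2)] a3 a4 by (rule refl)
    have e3: "npaths A u (Leaf i) = (\<Sum>w\<in>chs A u - {pi, pj}. npaths A w (Leaf i))
        + (if u = q then 1 else 0) + (if u = g then 1 else 0)"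
      unfolding npaths_rec[OF finA acyc False] sum_A[OF 1(2)] a5 a6 by (rule refl)
    have s: "(\<Sum>w\<in>chs A u - {pi, pj}. npaths Ar w (Leaf i)) + (\<Sum>w\<in>chs A u - {pi, pj}. npaths A w pj)
        = (\<Sum>w\<in>chs A u - {pi, pj}. npaths A w (Leaf i))"
      unfolding sum.distrib[symmetric]
      by (rule sum.cong) (simp_all add: IH2)
    show ?thesis unfolding e1 e2 e3 by (rule arith3[OF s])
  qed
  show ?case using part1 part2 by blast
qed

lemma retics_r: "{h\<in>Vr. is_retic Ar h} = {h\<in>V. is_retic A h} - {pi}"
proof -
  have "\<not> is_retic A pj" using rs(4) tree_not_retic by blast
  then show ?thesis using tyeq(4) by (auto simp: Vr_def)
qed

lemma mf_r: assumes "u \<in> Vr" shows "mf Vr Ar u = TT i j (mf V A u)"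
proof (cases "\<exists>k. u = Leaf k")
  case True
  then obtain k where k: "u = Leaf k" by blast
  have kV: "Leaf k \<in> V" "Leaf k \<in> Vr" using assms k by (auto simp: Vr_def)
  have m1: "mf Vr Ar u = ee k" using pnet.mf_Leaf[OF pnr kV(2)] k by simp
  have m2: "mf V A u = ee k" using mf_Leaf[OF kV(1)] k by simp
  have k0: "k \<noteq> 0" using label_range[OF kV(1)] by simp
  show ?thesis unfolding m1 m2 TT_def using k0 i0 rs(14)
    by (auto simp: ee_def fun_eq_iff)
next
  case False
  have uV: "u \<in> V" using assms by (simp add: Vr_def)
  have ui: "u \<noteq> Leaf i" "u \<noteq> Leaf j" using False by auto
  have R: "finite {h\<in>V. is_retic A h}" "pi \<in> {h\<in>V. is_retic A h}" using finV rs by auto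
  have np: "npaths A u pi = mf V A u i" "npaths A u pj = mf V A u j"
    using npaths_dual[OF ui(1)] npaths_dual[OF ui(2)] rs(1,2) i0 by (simp_all add: mf_def)
  show ?thesis
  proof
    fix k
    show "mf Vr Ar u k = TT i j (mf V A u) k"
    proof (cases "k = 0")
      case True
      have "mf Vr Ar u 0 = (\<Sum>h\<in>{h\<in>V. is_retic A h} - {pi}. npaths Ar u h)"
        using retics_r by (simp add: mf_def)
      also have "\<dots> = (\<Sum>h\<in>{h\<in>V. is_retic A h} - {pi}. npaths A u h)"
      proof (rule sum.cong)
        fix h assume h: "h \<in> {h\<in>V. is_retic A h} - {pi}"
        have "h \<noteq> pj" using h rs(4) tree_not_retic by blast
        then have "h \<in> Vr" using h by (auto simp: Vr_def)
        moreover have "h \<noteq> Leaf i" using h leaf_Leaf[OF rs(15)] leaf_not_retic by blast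
        ultimately show "npaths Ar u h = npaths A u h" using npaths_r[OF assms] by blast
      qed simp
      also have "\<dots> = mf V A u 0 - npaths A u pi"
        using sum.remove[OF R, of "\<lambda>h. npaths A u h"] by (simp add: mf_def)
      finally show ?thesis using True np i0 by (simp add: TT_def)
    next
      case k0: False
      show ?thesis
      proof (cases "k = i")
        case True
        have "mf Vr Ar u i = npaths Ar u (Leaf i)" using i0 by (simp add: mf_def)
        also have "\<dots> = mf V A u i - mf V A u j"
        proof -
          have h: "npaths Ar u (Leaf i) + npaths A u pj = npaths A u (Leaf i)" using npaths_r[OF assms] by blast
          have "mf V A u i = npaths A u (Leaf i)" using i0 by (simp add: mf_def)
          then show ?thesis using h np by arith
        qed
        finally show ?thesis using True by (simp add: TT_def)
      next
        case ki: False
        show ?thesis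
        proof (cases "Leaf k \<in> Vr")
          case True
          have "Leaf k \<noteq> Leaf i" using ki by simp
          then have "npaths Ar u (Leaf k) = npaths A u (Leaf k)" using npaths_r[OF assms] True by blast
          then show ?thesis using k0 ki by (simp add: mf_def TT_def)
        next
          case nk: False
          have "Leaf k \<noteq> pi"
          proof
            assume "Leaf k = pi" then have "is_leaf A pi" using leaf_iff[OF rs(10)] by blast
            then show False using rs(3) leaf_not_retic by blast
          qed
          moreover have "Leaf k \<noteq> pj"
          proof
            assume "Leaf k = pj" then have "is_leaf A pj" using leaf_iff[OF rs(11)] by blast
            then show False using rs(4) leaf_not_tree by blast
          qed
          ultimately have "Leaf k \<notin> V" using nk by (auto simp: Vr_def)
          then show ?thesis using pnet.mf_out[OF pnr assms k0 nk] mf_out[OF uV k0] ki k0 by (simp add: TT_def)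
        qed
      qed
    qed
  qed
qed

lemma TL_r: "TL Vr Ar = TL V A - {pj}"
proof -
  have e: "\<And>v. v \<in> V \<Longrightarrow> v \<noteq> pi \<Longrightarrow> v \<noteq> pj \<Longrightarrow>
    (is_leaf Ar v \<or> is_tree_node Ar v) = (is_leaf A v \<or> is_tree_node A v)"
    using tyeq by (simp add: Vr_def)
  have "\<not> (is_leaf A pi \<or> is_tree_node A pi)" using rs(3) leaf_not_retic tree_not_retic by blast
  then show ?thesis unfolding TL_def Vr_def using e by auto
qed

lemma vecset_r: "vecset Vr Ar = TT i j ` vecset V A"
proof
  show "vecset Vr Ar \<subseteq> TT i j ` vecset V A"
  proof
    fix y assume "y \<in> vecset Vr Ar"
    then obtain u where u: "u \<in> TL Vr Ar" "y = mf Vr Ar u" by (auto simp: vecset_def)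
    then have ur: "u \<in> Vr" by (simp add: TL_def)
    then show "y \<in> TT i j ` vecset V A" using u mf_r TL_r by (auto simp: vecset_def)
  qed
  show "TT i j ` vecset V A \<subseteq> vecset Vr Ar"
  proof
    fix y assume "y \<in> TT i j ` vecset V A"
    then obtain u where u: "u \<in> TL V A" "y = TT i j (mf V A u)" by (auto simp: vecset_def)
    show "y \<in> vecset Vr Ar"
    proof (cases "u = pj")
      case True
      have mi: "mf V A (Leaf i) = ee i" "mf V A (Leaf j) = ee j" using mf_Leaf rs by auto
      have "mf V A pi x = ee 0 x + ee i x" for x using mf_retic[OF rs(10,3,7)] mi by simp
      then have "mf V A pj x = ee j x + ee 0 x + ee i x" for x
        using mf_tree[OF rs(11,4,8) neqs(3)[symmetric]] mi by simp
      then have "TT i j (mf V A pj) = ee j" unfolding TT_def fun_eq_iff using i0 rs(14)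
        by (simp add: ee_def)
      then have y1: "y = ee j" using u(2) True by simp
      have jr: "Leaf j \<in> Vr" using rs neqs by (simp add: Vr_def)
      have "ee j = mf Vr Ar (Leaf j)" by (rule pnet.mf_Leaf[OF pnr jr, symmetric])
      then have "y = mf Vr Ar (Leaf j)" using y1 by simp
      moreover have "Leaf j \<in> TL Vr Ar" using TL_r rs leaf_Leaf neqs by (auto simp: TL_def)
      ultimately show ?thesis by (simp add: vecset_def)
    next
      case False
      then have "u \<in> TL Vr Ar" using u(1) TL_r by auto
      moreover then have "y = mf Vr Ar u" using mf_r u(2) by (simp add: TL_def)
      ultimately show ?thesis by (simp add: vecset_def)
    qed
  qed
qed

lemma char_r: "(u,v) \<in> A \<longleftrightarrow> ((u,v) \<in> Ar \<and> (u,v) \<notin> Adr) \<or> (u,v) \<in> Rmr"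
  unfolding Ar_def using char_mod[OF fins(2,3)] by blast

lemma V_split: "V = Vr \<union> {pi, pj}" "Vr \<inter> {pi, pj} = {}"
  using rs by (auto simp: Vr_def)

lemma pars_Ar: "pars Ar (Leaf i) = {q}" "pars Ar (Leaf j) = {g}"
  using rs(1,2) neqs by (auto simp: pars_def Ar_def Rmr_def Adr_def)

end

lemma retch_of: assumes "pnet n V A" "is_ret_cherry (V,A) (i,j)" shows "\<exists>pi pj q g. retch n V A i j pi pj q g"
proof -
  obtain pi pj q g where "pars A (Leaf i) = {pi}" "pars A (Leaf j) = {pj}" "is_retic A pi"
    "is_tree_node A pj" "pars A pi = {pj, q}" "pj \<noteq> q" "chs A pi = {Leaf i}"
    "chs A pj = {Leaf j, pi}" "pars A pj = {g}" "pi \<in> V" "pj \<in> V" "q \<in> V" "g \<in> V"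
    "i \<noteq> j" "Leaf i \<in> V" "Leaf j \<in> V"
    using pnet.ret_cherry_struct[OF assms] by blast
  then show ?thesis using assms(1) by (intro exI) (simp add: retch_def retch_axioms_def)
qed


locale isopair = N1: pnet n V1 A1 + N2: pnet n V2 A2
  for n V1 A1 V2 A2 +
  fixes f :: "node \<Rightarrow> node"
  assumes bij: "bij_betw f V1 V2"
    and lf: "\<And>i. Leaf i \<in> V1 \<Longrightarrow> f (Leaf i) = Leaf i"
    and arc: "\<And>u v. u \<in> V1 \<Longrightarrow> v \<in> V1 \<Longrightarrow> (u,v) \<in> A1 \<longleftrightarrow> (f u, f v) \<in> A2"
begin

lemma inj: "inj_on f V1" using bij_betw_imp_inj_on[OF bij] .
lemma img: "f ` V1 = V2" using bij_betw_imp_surj_on[OF bij] .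

lemma chs_f: assumes "u \<in> V1" shows "chs A2 (f u) = f ` chs A1 u"
proof
  show "chs A2 (f u) \<subseteq> f ` chs A1 u"
  proof
    fix w' assume "w' \<in> chs A2 (f u)"
    then have a: "(f u, w') \<in> A2" by (simp add: chs_def)
    then have "w' \<in> V2" using N2.arcV by blast
    then obtain w where w: "w \<in> V1" "w' = f w" using img by blast
    then have "(u, w) \<in> A1" using arc[OF assms w(1)] a by simp
    then show "w' \<in> f ` chs A1 u" using w by (auto simp: chs_def)
  qed
  show "f ` chs A1 u \<subseteq> chs A2 (f u)"
    using arc[OF assms] N1.arcV by (auto simp: chs_def)
qed

lemma pars_f: assumes "u \<in> V1" shows "pars A2 (f u) = f ` pars A1 u"
proof
  show "pars A2 (f u) \<subseteq> f ` pars A1 u"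
  proof
    fix w' assume "w' \<in> pars A2 (f u)"
    then have a: "(w', f u) \<in> A2" by (simp add: pars_def)
    then have "w' \<in> V2" using N2.arcV by blast
    then obtain w where w: "w \<in> V1" "w' = f w" using img by blast
    then have "(w, u) \<in> A1" using arc[OF w(1) assms] a by simp
    then show "w' \<in> f ` pars A1 u" using w by (auto simp: pars_def)
  qed
  show "f ` pars A1 u \<subseteq> pars A2 (f u)"
    using arc[OF _ assms] N1.arcV by (auto simp: pars_def)
qed

lemma deg_f: assumes "u \<in> V1" shows "indeg A2 (f u) = indeg A1 u" "outdeg A2 (f u) = outdeg A1 u"
proof -
  have "inj_on f (pars A1 u)" "inj_on f (chs A1 u)"
    using inj_on_subset[OF inj N1.pars_V] inj_on_subset[OF inj N1.chs_V] by simp_all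
  then show "indeg A2 (f u) = indeg A1 u" "outdeg A2 (f u) = outdeg A1 u"
    using pars_f[OF assms] chs_f[OF assms] by (simp_all add: indeg_eq outdeg_eq card_image)
qed

lemma ty_f: assumes "u \<in> V1"
  shows "is_root A2 (f u) = is_root A1 u" "is_leaf A2 (f u) = is_leaf A1 u"
    "is_tree_node A2 (f u) = is_tree_node A1 u" "is_retic A2 (f u) = is_retic A1 u"
  using deg_f[OF assms] by (simp_all add: is_root_def is_leaf_def is_tree_node_def is_retic_def)

lemma npaths_f: "u \<in> V1 \<Longrightarrow> v \<in> V1 \<Longrightarrow> npaths A2 (f u) (f v) = npaths A1 u v"
proof (induction u rule: wf_induct_rule[OF N1.wfc])
  case (1 u)
  show ?case
  proof (cases "u = v")
    case True
    then show ?thesis using npaths_self[OF N1.acyc] npaths_self[OF N2.acyc] by simp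
  next
    case False
    have ne: "f u \<noteq> f v"
    proof
      assume "f u = f v" then have "u = v" using inj_onD[OF inj _ 1(2) 1(3)] by simp
      then show False using False by simp
    qed
    have ij: "inj_on f (chs A1 u)" using inj_on_subset[OF inj N1.chs_V] by simp
    have "npaths A2 (f u) (f v) = (\<Sum>w'\<in>f ` chs A1 u. npaths A2 w' (f v))"
      using npaths_rec[OF N2.finA N2.acyc ne] chs_f[OF 1(2)] by simp
    also have "\<dots> = (\<Sum>w\<in>chs A1 u. npaths A2 (f w) (f v))" using sum.reindex[OF ij] by simp
    also have "\<dots> = (\<Sum>w\<in>chs A1 u. npaths A1 w v)"
    proof (rule sum.cong)
      fix w assume w: "w \<in> chs A1 u"
      then have "w \<in> V1" "(w, u) \<in> A1\<inverse>" using N1.chs_V by (auto simp: chs_def)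
      then show "npaths A2 (f w) (f v) = npaths A1 w v" using 1(1) 1(3) by blast
    qed simp
    also have "\<dots> = npaths A1 u v" using npaths_rec[OF N1.finA N1.acyc False] by simp
    finally show ?thesis .
  qed
qed

lemma retics_f: "{h\<in>V2. is_retic A2 h} = f ` {h\<in>V1. is_retic A1 h}"
  using img ty_f(4) by auto

lemma Leaf_V2: assumes "Leaf k \<in> V2" shows "Leaf k \<in> V1"
proof -
  have "Leaf k \<in> f ` V1" using assms img by simp
  then obtain x where x0: "Leaf k = f x" "x \<in> V1" by (rule imageE)
  then have x: "x \<in> V1" "f x = Leaf k" by simp_all
  have "is_leaf A2 (Leaf k)" using N2.leaf_Leaf[OF assms] .
  then have "is_leaf A1 x" using ty_f(2)[OF x(1)] x(2) by simp
  then obtain m where m: "x = Leaf m" using N1.leaf_iff x(1) by auto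
  then have "f x = Leaf m" using lf x(1) by simp
  then show ?thesis using x m by simp
qed

lemma mf_f: assumes "u \<in> V1" shows "mf V2 A2 (f u) = mf V1 A1 u"
proof
  fix k
  have fuV: "f u \<in> V2" using img assms by blast
  show "mf V2 A2 (f u) k = mf V1 A1 u k"
  proof (cases "k = 0")
    case True
    have ij: "inj_on f {h\<in>V1. is_retic A1 h}" by (rule inj_on_subset[OF inj]) auto
    have "mf V2 A2 (f u) k = (\<Sum>h\<in>f ` {h\<in>V1. is_retic A1 h}. npaths A2 (f u) h)"
      using True retics_f by (simp add: mf_def)
    also have "\<dots> = (\<Sum>h\<in>{h\<in>V1. is_retic A1 h}. npaths A2 (f u) (f h))" using sum.reindex[OF ij] by simp
    also have "\<dots> = (\<Sum>h\<in>{h\<in>V1. is_retic A1 h}. npaths A1 u h)"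
      by (rule sum.cong) (use npaths_f[OF assms] in auto)
    finally show ?thesis using True by (simp add: mf_def)
  next
    case False
    show ?thesis
    proof (cases "Leaf k \<in> V1")
      case True
      then show ?thesis using npaths_f[OF assms True] lf[OF True] False by (simp add: mf_def)
    next
      case nk: False
      then have "Leaf k \<notin> V2" using Leaf_V2 by blast
      then show ?thesis using N2.mf_out[OF fuV False] N1.mf_out[OF assms False nk] by simp
    qed
  qed
qed

lemma TL_f: "TL V2 A2 = f ` TL V1 A1"
proof
  show "TL V2 A2 \<subseteq> f ` TL V1 A1"
  proof
    fix v assume v: "v \<in> TL V2 A2"
    then have "v \<in> f ` V1" using img by (simp add: TL_def)
    then obtain x where x: "v = f x" "x \<in> V1" by (rule imageE)
    then have "x \<in> TL V1 A1" using v ty_f[OF x(2)] by (simp add: TL_def)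
    then show "v \<in> f ` TL V1 A1" using x by simp
  qed
  show "f ` TL V1 A1 \<subseteq> TL V2 A2"
  proof
    fix v assume "v \<in> f ` TL V1 A1"
    then obtain x where x: "v = f x" "x \<in> TL V1 A1" by (rule imageE)
    then have xV: "x \<in> V1" by (simp add: TL_def)
    then have "f x \<in> V2" using img by blast
    then show "v \<in> TL V2 A2" using x ty_f[OF xV] by (simp add: TL_def)
  qed
qed

lemma vecset_f: "vecset V2 A2 = vecset V1 A1"
proof -
  have "vecset V2 A2 = mf V2 A2 ` f ` TL V1 A1" by (simp add: vecset_def TL_f)
  also have "\<dots> = mf V1 A1 ` TL V1 A1"
    unfolding image_image by (rule image_cong) (simp_all add: TL_def mf_f)
  finally show ?thesis by (simp add: vecset_def)
qed

end

lemma iso_vecset: assumes "pnet n V1 A1" "pnet n V2 A2" "net_iso (V1,A1) (V2,A2)"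
  shows "vecset V1 A1 = vecset V2 A2"
proof -
  obtain f where "bij_betw f V1 V2" "\<forall>i. Leaf i \<in> V1 \<longrightarrow> f (Leaf i) = Leaf i"
    "\<forall>u\<in>V1. \<forall>v\<in>V1. (u, v) \<in> A1 \<longleftrightarrow> (f u, f v) \<in> A2"
    using assms(3) by (auto simp: net_iso_def)
  then have "isopair n V1 A1 V2 A2 f" using assms(1,2) by (simp add: isopair_def isopair_axioms_def)
  then show ?thesis using isopair.vecset_f by fastforce
qed


lemma (in pnet) not_Leaf_of_nonleaf: "v \<in> V \<Longrightarrow> \<not> is_leaf A v \<Longrightarrow> v \<noteq> Leaf k"
  using leaf_iff by auto

lemma cherry_lift:
  assumes C1: "cherry n V1 A1 i j p1 g1" and C2: "cherry n V2 A2 i j p2 g2"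
    and iso: "net_iso (reduce (V1,A1) (i,j)) (reduce (V2,A2) (i,j))"
  shows "net_iso (V1,A1) (V2,A2)"
proof -
  interpret C1: cherry n V1 A1 i j p1 g1 by (rule C1)
  interpret C2: cherry n V2 A2 i j p2 g2 by (rule C2)
  obtain f where f: "bij_betw f C1.Vc C2.Vc" "\<forall>k. Leaf k \<in> C1.Vc \<longrightarrow> f (Leaf k) = Leaf k"
    "\<forall>u\<in>C1.Vc. \<forall>v\<in>C1.Vc. (u, v) \<in> C1.Ac \<longleftrightarrow> (f u, f v) \<in> C2.Ac"
    using iso unfolding C1.reduce_eq C2.reduce_eq net_iso_def by auto
  have gV: "g1 \<in> C1.Vc" "Leaf j \<in> C1.Vc" using C1.gV C1.neqs C1.cs by (auto simp: C1.Vc_def)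
  have "(g1, Leaf j) \<in> C1.Ac" by (simp add: C1.Ac_def C1.Adc_def)
  then have "(f g1, f (Leaf j)) \<in> C2.Ac" using f(3) gV by blast
  moreover have fj: "f (Leaf j) = Leaf j" using f(2) gV by blast
  ultimately have "f g1 \<in> pars C2.Ac (Leaf j)" by (simp add: pars_def)
  then have fg: "f g1 = g2" using C2.pars_Ac_j by simp
  define h where "h = (\<lambda>x. if x = p1 then p2 else x)"
  define F where "F = (\<lambda>x. if x \<in> {p1, Leaf i} then h x else f x)"
  have bh: "bij_betw h {p1, Leaf i} {p2, Leaf i}"
    using C1.neqs(4) C2.neqs(4) by (auto simp: bij_betw_def inj_on_def h_def)
  have Fv: "F p1 = p2" "F (Leaf i) = Leaf i" "F (Leaf j) = Leaf j" "F g1 = g2"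
    using C1.neqs fj fg by (auto simp: F_def h_def)
  have res: "bij_betw F V1 V2 \<and> (\<forall>u\<in>V1. \<forall>v\<in>V1. (u,v) \<in> A1 \<longleftrightarrow> (F u, F v) \<in> A2)"
  proof (rule iso_lift[OF f(1) f(3) C1.Ac_sub C2.Ac_sub C1.V_split C2.V_split bh F_def])
    show "\<And>u v. (u,v) \<in> A1 \<longleftrightarrow> ((u,v) \<in> C1.Ac \<and> (u,v) \<notin> C1.Adc) \<or> (u,v) \<in> C1.Rmc"
      by (rule C1.char_c)
    show "\<And>u v. (u,v) \<in> A2 \<longleftrightarrow> ((u,v) \<in> C2.Ac \<and> (u,v) \<notin> C2.Adc) \<or> (u,v) \<in> C2.Rmc"
      by (rule C2.char_c)
    show "C1.Adc \<subseteq> V1 \<times> V1" using C1.gV C1.cs by (auto simp: C1.Adc_def)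
    show "C1.Rmc \<subseteq> V1 \<times> V1" using C1.fins(2) C1.AVV by blast
    show "(\<lambda>(x,y). (F x, F y)) ` C1.Adc = C2.Adc" using Fv by (simp add: C1.Adc_def C2.Adc_def)
    show "(\<lambda>(x,y). (F x, F y)) ` C1.Rmc = C2.Rmc" using Fv by (simp add: C1.Rmc_def C2.Rmc_def)
  qed
  have lfix: "F (Leaf k) = Leaf k" if "Leaf k \<in> V1" for k
  proof (cases "Leaf k \<in> {p1, Leaf i}")
    case True
    have "Leaf k \<noteq> p1" using C1.cs(4) C1.leaf_Leaf[OF that] C1.leaf_not_tree by auto
    then have "Leaf k = Leaf i" using True by simp
    then show ?thesis using Fv by simp
  next
    case False
    then have "Leaf k \<in> C1.Vc" using that C1.V_split by auto
    then show ?thesis using False f(2) by (simp add: F_def)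
  qed
  show ?thesis unfolding net_iso_def using res lfix by auto
qed

lemma ret_lift:
  assumes R1: "retch n V1 A1 i j pi1 pj1 q1 g1" and R2: "retch n V2 A2 i j pi2 pj2 q2 g2"
    and iso: "net_iso (reduce (V1,A1) (i,j)) (reduce (V2,A2) (i,j))"
  shows "net_iso (V1,A1) (V2,A2)"
proof -
  interpret R1: retch n V1 A1 i j pi1 pj1 q1 g1 by (rule R1)
  interpret R2: retch n V2 A2 i j pi2 pj2 q2 g2 by (rule R2)
  obtain f where f: "bij_betw f R1.Vr R2.Vr" "\<forall>k. Leaf k \<in> R1.Vr \<longrightarrow> f (Leaf k) = Leaf k"
    "\<forall>u\<in>R1.Vr. \<forall>v\<in>R1.Vr. (u, v) \<in> R1.Ar \<longleftrightarrow> (f u, f v) \<in> R2.Ar"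
    using iso unfolding R1.reduce_eq R2.reduce_eq net_iso_def by auto
  have inV: "g1 \<in> R1.Vr" "q1 \<in> R1.Vr" "Leaf j \<in> R1.Vr" "Leaf i \<in> R1.Vr"
    using R1.rs R1.neqs by (auto simp: R1.Vr_def)
  have "(g1, Leaf j) \<in> R1.Ar" "(q1, Leaf i) \<in> R1.Ar" by (simp_all add: R1.Ar_def R1.Adr_def)
  then have "(f g1, f (Leaf j)) \<in> R2.Ar" "(f q1, f (Leaf i)) \<in> R2.Ar" using f(3) inV by blast+
  moreover have fl: "f (Leaf j) = Leaf j" "f (Leaf i) = Leaf i" using f(2) inV by blast+
  ultimately have "f g1 \<in> pars R2.Ar (Leaf j)" "f q1 \<in> pars R2.Ar (Leaf i)" by (simp_all add: pars_def)
  then have fg: "f g1 = g2" "f q1 = q2" using R2.pars_Ar by simp_all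
  define h where "h = (\<lambda>x. if x = pi1 then pi2 else pj2)"
  define F where "F = (\<lambda>x. if x \<in> {pi1, pj1} then h x else f x)"
  have bh: "bij_betw h {pi1, pj1} {pi2, pj2}"
    using R1.neqs(1) R2.neqs(1) by (auto simp: bij_betw_def inj_on_def h_def)
  have Fv: "F pi1 = pi2" "F pj1 = pj2" "F (Leaf i) = Leaf i" "F (Leaf j) = Leaf j" "F g1 = g2" "F q1 = q2"
    using R1.neqs R1.rs(6) fl fg by (auto simp: F_def h_def)
  have res: "bij_betw F V1 V2 \<and> (\<forall>u\<in>V1. \<forall>v\<in>V1. (u,v) \<in> A1 \<longleftrightarrow> (F u, F v) \<in> A2)"
  proof (rule iso_lift[OF f(1) f(3) R1.Ar_sub R2.Ar_sub R1.V_split R2.V_split bh F_def])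
    show "\<And>u v. (u,v) \<in> A1 \<longleftrightarrow> ((u,v) \<in> R1.Ar \<and> (u,v) \<notin> R1.Adr) \<or> (u,v) \<in> R1.Rmr"
      by (rule R1.char_r)
    show "\<And>u v. (u,v) \<in> A2 \<longleftrightarrow> ((u,v) \<in> R2.Ar \<and> (u,v) \<notin> R2.Adr) \<or> (u,v) \<in> R2.Rmr"
      by (rule R2.char_r)
    show "R1.Adr \<subseteq> V1 \<times> V1" using R1.rs by (auto simp: R1.Adr_def)
    show "R1.Rmr \<subseteq> V1 \<times> V1" using R1.fins(2) R1.AVV by blast
    show "(\<lambda>(x,y). (F x, F y)) ` R1.Adr = R2.Adr" using Fv by (simp add: R1.Adr_def R2.Adr_def)
    show "(\<lambda>(x,y). (F x, F y)) ` R1.Rmr = R2.Rmr" using Fv by (simp add: R1.Rmr_def R2.Rmr_def)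
  qed
  have lfix: "F (Leaf k) = Leaf k" if "Leaf k \<in> V1" for k
  proof -
    have "Leaf k \<noteq> pj1" using R1.rs(4) R1.leaf_Leaf[OF that] R1.leaf_not_tree by auto
    moreover have "Leaf k \<noteq> pi1" using R1.rs(3) R1.leaf_Leaf[OF that] R1.leaf_not_retic by auto
    ultimately have "Leaf k \<in> R1.Vr" "Leaf k \<notin> {pi1, pj1}" using that by (auto simp: R1.Vr_def)
    then show ?thesis using f(2) by (simp add: F_def)
  qed
  show ?thesis unfolding net_iso_def using res lfix by auto
qed


lemma base_case:
  assumes P1: "pnet n V1 A1" and P2: "pnet n V2 A2" and V: "V1 = {r, Leaf a}" and A: "A1 = {(r, Leaf a)}"
    and r: "\<forall>k. r \<noteq> Leaf k" and vs: "vecset V1 A1 = vecset V2 A2"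
  shows "net_iso (V1,A1) (V2,A2)"
proof -
  interpret N1: pnet n V1 A1 by (rule P1)
  interpret N2: pnet n V2 A2 by (rule P2)
  have LV: "Leaf a \<in> V1" using V by simp
  have rne: "r \<noteq> Leaf a" using r by simp
  have "indeg A1 r = 0" using rne by (simp add: A indeg_def)
  then have "\<not> is_leaf A1 r" "\<not> is_tree_node A1 r" by (simp_all add: is_leaf_def is_tree_node_def)
  then have "TL V1 A1 = {Leaf a}" using N1.leaf_Leaf[OF LV] by (auto simp: TL_def V)
  then have vs1: "vecset V1 A1 = {ee a}" using N1.mf_Leaf[OF LV] by (simp add: vecset_def)
  have a0: "a \<noteq> 0" using N1.label_range[OF LV] by simp
  obtain c where c: "chs A2 N2.rt = {c}" "c \<in> TL V2 A2" "\<And>v. v \<in> V2 \<Longrightarrow> v \<noteq> N2.rt \<Longrightarrow> (c, v) \<in> A2\<^sup>*"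
    using N2.root_child by blast
  have "mf V2 A2 c \<in> vecset V2 A2" using c(2) by (simp add: vecset_def)
  then have "mf V2 A2 c \<in> {ee a}" using vs vs1 by simp
  then have "mf V2 A2 c = ee a" by simp
  then have ca: "c = Leaf a" using N2.leaf_vec_unique[OF c(2) _ a0] by simp
  have caV: "Leaf a \<in> V2" using c(2) ca by (simp add: TL_def)
  have nc: "chs A2 (Leaf a) = {}" using N2.Leaf_chs[OF caV] .
  have rt2ne: "N2.rt \<noteq> Leaf a" using N2.rt(2) N2.leaf_not_root[OF N2.leaf_Leaf[OF caV]] by auto
  have V2e: "V2 = {N2.rt, Leaf a}"
  proof
    show "V2 \<subseteq> {N2.rt, Leaf a}"
    proof
      fix v assume v: "v \<in> V2"
      show "v \<in> {N2.rt, Leaf a}"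
      proof (cases "v = N2.rt")
        case False
        then have "(Leaf a, v) \<in> A2\<^sup>*" using c(3)[OF v] ca by simp
        then have "v = Leaf a" using nc by (cases rule: converse_rtranclE) (auto simp: chs_def)
        then show ?thesis by simp
      qed simp
    qed
    show "{N2.rt, Leaf a} \<subseteq> V2" using N2.rt caV by simp
  qed
  have A2e: "A2 = {(N2.rt, Leaf a)}"
  proof
    show "A2 \<subseteq> {(N2.rt, Leaf a)}"
    proof
      fix x assume x: "x \<in> A2"
      obtain u v where uv: "x = (u,v)" by (cases x)
      then have "u \<in> V2" using x N2.arcV by blast
      moreover have "u \<noteq> Leaf a" using nc x uv by (auto simp: chs_def)
      ultimately have "u = N2.rt" using V2e by auto
      then have "v \<in> chs A2 N2.rt" using x uv by (simp add: chs_def)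
      then show "x \<in> {(N2.rt, Leaf a)}" using c(1) ca uv \<open>u = N2.rt\<close> by simp
    qed
    have "Leaf a \<in> chs A2 N2.rt" using c(1) ca by simp
    then show "{(N2.rt, Leaf a)} \<subseteq> A2" by (simp add: chs_def)
  qed
  obtain r2 where R2: "V2 = {r2, Leaf a}" "A2 = {(r2, Leaf a)}" "r2 \<noteq> Leaf a"
    using V2e A2e rt2ne by blast
  define f where "f = (\<lambda>x. if x = r then r2 else x)"
  have "bij_betw f V1 V2" using rne R2(3) unfolding bij_betw_def inj_on_def f_def V R2(1) by auto
  moreover have "\<forall>i. Leaf i \<in> V1 \<longrightarrow> f (Leaf i) = Leaf i" using r by (auto simp: f_def V)
  moreover have "\<forall>u\<in>V1. \<forall>v\<in>V1. (u,v) \<in> A1 \<longleftrightarrow> (f u, f v) \<in> A2"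
    using rne R2(3) unfolding f_def V A R2(2) by auto
  ultimately show ?thesis unfolding net_iso_def by auto
qed

lemma reduce_seq_Cons: "reduce_seq N (s # S) = reduce_seq (reduce N s) S"
  by (simp add: reduce_seq_def)

lemma inj_main:
  "reducible_seq N S \<Longrightarrow> N = (V1,A1) \<Longrightarrow> pnet n V1 A1 \<Longrightarrow> reduce_seq N S = ({r, Leaf a}, {(r, Leaf a)})
   \<Longrightarrow> \<forall>k. r \<noteq> Leaf k \<Longrightarrow> pnet n V2 A2 \<Longrightarrow> vecset V1 A1 = vecset V2 A2 \<Longrightarrow> net_iso (V1,A1) (V2,A2)"
proof (induction S arbitrary: N V1 A1 V2 A2)
  case Nil
  then have "V1 = {r, Leaf a}" "A1 = {(r, Leaf a)}" by (simp_all add: reduce_seq_def)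
  then show ?case using base_case Nil by blast
next
  case (Cons s S)
  obtain i j where s: "s = (i,j)" by (cases s)
  have red: "is_reducible (V1,A1) (i,j)" "reducible_seq (reduce (V1,A1) (i,j)) S"
    using Cons.prems(1,2) s by simp_all
  have rs: "reduce_seq (reduce (V1,A1) (i,j)) S = ({r, Leaf a}, {(r, Leaf a)})"
    using Cons.prems(2,4) s reduce_seq_Cons by simp
  interpret N1: pnet n V1 A1 by (rule Cons.prems(3))
  interpret N2: pnet n V2 A2 by (rule Cons.prems(6))
  show ?case
  proof (cases "is_cherry (V1,A1) (i,j)")
    case True
    obtain p1 g1 where C1: "cherry n V1 A1 i j p1 g1" using cherry_of[OF Cons.prems(3) True] by blast
    interpret C1: cherry n V1 A1 i j p1 g1 by (rule C1)
    have i0: "i \<noteq> 0" "j \<noteq> 0" using N1.label_range[OF C1.cs(8)] N1.label_range[OF C1.cs(9)] by auto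
    have mi: "mf V1 A1 (Leaf i) = ee i" "mf V1 A1 (Leaf j) = ee j" using N1.mf_Leaf C1.cs by auto
    have "mf V1 A1 p1 x = ee i x + ee j x" for x
      using N1.mf_tree[OF C1.cs(6) C1.cs(4) C1.cs(3) C1.neqs(6)] mi by simp
    then have "mf V1 A1 p1 = (\<lambda>x. ee i x + ee j x)" by blast
    moreover have "p1 \<in> TL V1 A1" using C1.cs by (simp add: TL_def)
    ultimately have "(\<lambda>x. ee i x + ee j x) \<in> vecset V2 A2" using Cons.prems(7) by (force simp: vecset_def)
    then obtain u where u: "u \<in> TL V2 A2" "mf V2 A2 u = (\<lambda>x. ee i x + ee j x)" by (auto simp: vecset_def)
    have "is_cherry (V2,A2) (i,j)" using N2.detect_cherry[OF u C1.cs(7) i0] .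
    then obtain p2 g2 where C2: "cherry n V2 A2 i j p2 g2" using cherry_of[OF Cons.prems(6)] by blast
    interpret C2: cherry n V2 A2 i j p2 g2 by (rule C2)
    have "net_iso (C1.Vc, C1.Ac) (C2.Vc, C2.Ac)"
    proof (rule Cons.IH)
      show "reducible_seq (C1.Vc, C1.Ac) S" using red(2) C1.reduce_eq by simp
      show "pnet n C1.Vc C1.Ac" by (rule C1.pnc)
      show "reduce_seq (C1.Vc, C1.Ac) S = ({r, Leaf a}, {(r, Leaf a)})" using rs C1.reduce_eq by simp
      show "\<forall>k. r \<noteq> Leaf k" by (rule Cons.prems(5))
      show "pnet n C2.Vc C2.Ac" by (rule C2.pnc)
      show "vecset C1.Vc C1.Ac = vecset C2.Vc C2.Ac" using C1.vecset_c C2.vecset_c Cons.prems(7) by simp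
    qed simp
    then show ?thesis using cherry_lift[OF C1 C2] C1.reduce_eq C2.reduce_eq by simp
  next
    case False
    then have rc: "is_ret_cherry (V1,A1) (i,j)" using red(1) by (simp add: is_reducible_def)
    obtain pi1 pj1 q1 g1 where R1: "retch n V1 A1 i j pi1 pj1 q1 g1" using retch_of[OF Cons.prems(3) rc] by blast
    interpret R1: retch n V1 A1 i j pi1 pj1 q1 g1 by (rule R1)
    have mi: "mf V1 A1 (Leaf i) = ee i" "mf V1 A1 (Leaf j) = ee j" using N1.mf_Leaf R1.rs by auto
    have "mf V1 A1 pi1 x = ee 0 x + ee i x" for x using N1.mf_retic[OF R1.rs(10,3,7)] mi by simp
    then have "mf V1 A1 pj1 x = ee 0 x + ee i x + ee j x" for x
      using N1.mf_tree[OF R1.rs(11,4,8) R1.neqs(3)[symmetric]] mi by simp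
    then have "mf V1 A1 pj1 = (\<lambda>x. ee 0 x + ee i x + ee j x)" by blast
    moreover have "pj1 \<in> TL V1 A1" using R1.rs by (simp add: TL_def)
    ultimately have "(\<lambda>x. ee 0 x + ee i x + ee j x) \<in> vecset V2 A2" using Cons.prems(7) by (force simp: vecset_def)
    then obtain u where u: "u \<in> TL V2 A2" "mf V2 A2 u = (\<lambda>x. ee 0 x + ee i x + ee j x)" by (auto simp: vecset_def)
    have rc2: "is_ret_cherry (V2,A2) (i,j)"
    proof -
      have "is_ret_cherry (V2,A2) (i,j) \<or> is_ret_cherry (V2,A2) (j,i)"
        using N2.detect_ret[OF u R1.rs(14) R1.i0] .
      moreover have "\<not> is_ret_cherry (V2,A2) (j,i)"
      proof
        assume "is_ret_cherry (V2,A2) (j,i)"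
        then obtain t where t: "t \<in> TL V2 A2" "\<not> is_leaf A2 t" "mf V2 A2 t i < mf V2 A2 t j"
          using N2.ret_orient2 by blast
        have "mf V2 A2 t \<in> vecset V1 A1" using t(1) Cons.prems(7) by (simp add: vecset_def)
        then obtain x where x: "x \<in> TL V1 A1" "mf V1 A1 x = mf V2 A2 t" by (auto simp: vecset_def)
        have "x = Leaf j"
        proof (rule ccontr)
          assume "x \<noteq> Leaf j"
          then have "mf V1 A1 x j \<le> mf V1 A1 x i" using N1.ret_orient1[OF rc x(1)] by simp
          then show False using x(2) t(3) by simp
        qed
        then have "mf V2 A2 t = ee j" using x(2) mi by simp
        then have "t = Leaf j" using N2.leaf_vec_unique[OF t(1) _ R1.i0(2)] by simp
        then show False using t(1,2) N2.leaf_Leaf by (auto simp: TL_def)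
      qed
      ultimately show ?thesis by simp
    qed
    obtain pi2 pj2 q2 g2 where R2: "retch n V2 A2 i j pi2 pj2 q2 g2" using retch_of[OF Cons.prems(6) rc2] by blast
    interpret R2: retch n V2 A2 i j pi2 pj2 q2 g2 by (rule R2)
    have "net_iso (R1.Vr, R1.Ar) (R2.Vr, R2.Ar)"
    proof (rule Cons.IH)
      show "reducible_seq (R1.Vr, R1.Ar) S" using red(2) R1.reduce_eq by simp
      show "pnet n R1.Vr R1.Ar" by (rule R1.pnr)
      show "reduce_seq (R1.Vr, R1.Ar) S = ({r, Leaf a}, {(r, Leaf a)})" using rs R1.reduce_eq by simp
      show "\<forall>k. r \<noteq> Leaf k" by (rule Cons.prems(5))
      show "pnet n R2.Vr R2.Ar" by (rule R2.pnr)
      show "vecset R1.Vr R1.Ar = vecset R2.Vr R2.Ar" using R1.vecset_r R2.vecset_r Cons.prems(7) by simp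
    qed simp
    then show ?thesis using ret_lift[OF R1 R2] R1.reduce_eq R2.reduce_eq by simp
  qed
qed


lemma mu_rep_vecset: "mu_rep n (V,A) = (\<lambda>f. map f [0..<Suc n]) ` vecset V A"
  unfolding mu_rep_def vecset_def TL_def by (simp add: mu_vec_mf image_image)

lemma vecset_Z: assumes "pnet n V A" shows "vecset V A \<subseteq> {f. \<forall>k>n. f k = 0}"
  using pnet.mf_big[OF assms] by (auto simp: vecset_def TL_def)

lemma inj_L: "inj_on (\<lambda>f. map f [0..<Suc n]) {f :: nat \<Rightarrow> nat. \<forall>k>n. f k = 0}"
proof (rule inj_onI)
  fix f g :: "nat \<Rightarrow> nat"
  assume f: "f \<in> {f. \<forall>k>n. f k = 0}" and g: "g \<in> {f. \<forall>k>n. f k = 0}"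
    and e: "map f [0..<Suc n] = map g [0..<Suc n]"
  show "f = g"
  proof
    fix k
    show "f k = g k"
    proof (cases "k \<le> n")
      case True
      then have "k \<in> set [0..<Suc n]" by auto
      then show ?thesis using e map_eq_conv by metis
    next
      case False then show ?thesis using f g by simp
    qed
  qed
qed

lemma mu_rep_iff: assumes "pnet n V1 A1" "pnet n V2 A2"
  shows "mu_rep n (V1,A1) = mu_rep n (V2,A2) \<longleftrightarrow> vecset V1 A1 = vecset V2 A2"
  unfolding mu_rep_vecset using inj_on_image_eq_iff[OF inj_L vecset_Z[OF assms(1)] vecset_Z[OF assms(2)]] .

lemma finite_mu_rep: assumes "pnet n V A" shows "finite (mu_rep n (V,A))"
proof -
  have "finite (TL V A)" using pnet.finV[OF assms] by (simp add: TL_def)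
  then show ?thesis by (simp add: mu_rep_vecset vecset_def)
qed

lemma card_symdiff_tri: assumes "finite X" "finite Y" "finite Z"
  shows "card ((X - Z) \<union> (Z - X)) \<le> card ((X - Y) \<union> (Y - X)) + card ((Y - Z) \<union> (Z - Y))"
proof -
  have "(X - Z) \<union> (Z - X) \<subseteq> ((X - Y) \<union> (Y - X)) \<union> ((Y - Z) \<union> (Z - Y))" by auto
  then have "card ((X - Z) \<union> (Z - X)) \<le> card (((X - Y) \<union> (Y - X)) \<union> ((Y - Z) \<union> (Z - Y)))"
    using assms by (intro card_mono) auto
  also have "\<dots> \<le> card ((X - Y) \<union> (Y - X)) + card ((Y - Z) \<union> (Z - Y))" by (rule card_Un_le)
  finally show ?thesis .
qed

theorem mainTheorem12:
  fixes n :: nat and N1 N2 N3 :: network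
  assumes "orchard n N1" and "orchard n N2" and "orchard n N3"
  shows "d_mu n N1 N2 \<ge> 0
    \<and> (d_mu n N1 N2 = 0 \<longleftrightarrow> net_iso N1 N2)
    \<and> d_mu n N1 N2 = d_mu n N2 N1
    \<and> d_mu n N1 N3 \<le> d_mu n N1 N2 + d_mu n N2 N3"
proof -
  obtain V1 A1 where N1: "N1 = (V1,A1)" by (cases N1)
  obtain V2 A2 where N2: "N2 = (V2,A2)" by (cases N2)
  obtain V3 A3 where N3: "N3 = (V3,A3)" by (cases N3)
  have P1: "pnet n V1 A1" using assms(1) N1 by (simp add: orchard_def pnet_def)
  have P2: "pnet n V2 A2" using assms(2) N2 by (simp add: orchard_def pnet_def)
  have P3: "pnet n V3 A3" using assms(3) N3 by (simp add: orchard_def pnet_def)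
  have F: "finite (mu_rep n N1)" "finite (mu_rep n N2)" "finite (mu_rep n N3)"
    using finite_mu_rep P1 P2 P3 N1 N2 N3 by auto
  have sym: "d_mu n N1 N2 = d_mu n N2 N1" by (simp add: d_mu_def Un_commute)
  have tri: "d_mu n N1 N3 \<le> d_mu n N1 N2 + d_mu n N2 N3"
    unfolding d_mu_def using card_symdiff_tri[OF F(1) F(2) F(3)] .
  have zero: "d_mu n N1 N2 = 0 \<longleftrightarrow> mu_rep n N1 = mu_rep n N2"
  proof -
    have "finite ((mu_rep n N1 - mu_rep n N2) \<union> (mu_rep n N2 - mu_rep n N1))" using F by simp
    then have "d_mu n N1 N2 = 0 \<longleftrightarrow> (mu_rep n N1 - mu_rep n N2) \<union> (mu_rep n N2 - mu_rep n N1) = {}"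
      by (simp add: d_mu_def)
    also have "\<dots> \<longleftrightarrow> mu_rep n N1 = mu_rep n N2" by auto
    finally show ?thesis .
  qed
  have isoiff: "mu_rep n N1 = mu_rep n N2 \<longleftrightarrow> net_iso N1 N2"
  proof
    assume "mu_rep n N1 = mu_rep n N2"
    then have vs: "vecset V1 A1 = vecset V2 A2" using mu_rep_iff[OF P1 P2] N1 N2 by simp
    obtain S r a where S: "reducible_seq N1 S" "\<forall>k. r \<noteq> Leaf k" "reduce_seq N1 S = ({r, Leaf a}, {(r, Leaf a)})"
      using assms(1) by (auto simp: orchard_def)
    show "net_iso N1 N2" using inj_main[OF S(1) N1 P1 S(3) S(2) P2 vs] N1 N2 by simp
  next
    assume "net_iso N1 N2"
    then have "vecset V1 A1 = vecset V2 A2" using iso_vecset[OF P1 P2] N1 N2 by simp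
    then show "mu_rep n N1 = mu_rep n N2" using mu_rep_iff[OF P1 P2] N1 N2 by simp
  qed
  show ?thesis using sym tri zero isoiff by simp
qed


end
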